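(* Let $\Omega\subset\mathbb R^2$ be a bounded connected domain with smooth boundary (possibly with holes), $B\in C^\infty(\overline\Omega)$ with $B>0$, and $\psi_0$ the solution of $\Delta\psi_0=B$ in $\Omega$, $\psi_0=0$ on $\partial\Omega$. Then for every real ${\bf A}\in C^1(\overline\Omega;\mathbb R^2)$ with $\partial_{x_1}A_2-\partial_{x_2}A_1=B$, \[ \liminf_{h\to0^+}h\log\lambda^D_{P_-}(h,{\bf A},B,\Omega)\ \ge\ 2\inf\psi_0 . \]
   Context: $\lambda^D_{P_-}(h,{\bf A},B,\Omega)=\inf_{u\in H^1_0(\Omega)\setminus\{0\}}\big(\|(hD-{\bf A})u\|^2-h\int_\Omega B|u|^2\big)/\|u\|^2$, $D=-i\nabla$, the ground state energy of the Dirichlet Pauli operator $(hD_{x_1}-A_1)^2+(hD_{x_2}-A_2)^2-hB$. *)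

theory Defs
  imports "HOL-Analysis.Analysis"
begin

definition pd1 :: "(real \<times> real \<Rightarrow> 'b::real_normed_vector) \<Rightarrow> real \<times> real \<Rightarrow> 'b" where
  "pd1 f x = frechet_derivative f (at x) (1, 0)"

definition pd2 :: "(real \<times> real \<Rightarrow> 'b::real_normed_vector) \<Rightarrow> real \<times> real \<Rightarrow> 'b" where
  "pd2 f x = frechet_derivative f (at x) (0, 1)"

fun Ck_on :: "nat \<Rightarrow> (real \<times> real) set \<Rightarrow> (real \<times> real \<Rightarrow> 'b::real_normed_vector) \<Rightarrow> bool" where
  "Ck_on 0 U f = continuous_on U f"
| "Ck_on (Suc k) U f =
     ((\<forall>x\<in>U. f differentiable (at x)) \<and> continuous_on U f \<and> Ck_on k U (pd1 f) \<and> Ck_on k U (pd2 f))"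

definition smooth_on :: "(real \<times> real) set \<Rightarrow> (real \<times> real \<Rightarrow> 'b::real_normed_vector) \<Rightarrow> bool" where
  "smooth_on U f \<longleftrightarrow> (\<forall>k. Ck_on k U f)"

definition Ck_closure :: "nat \<Rightarrow> (real \<times> real) set \<Rightarrow> (real \<times> real \<Rightarrow> 'b::real_normed_vector) \<Rightarrow> bool" where
  "Ck_closure k \<Omega> f \<longleftrightarrow> (\<exists>U. open U \<and> closure \<Omega> \<subseteq> U \<and> Ck_on k U f)"

definition smooth_closure :: "(real \<times> real) set \<Rightarrow> (real \<times> real \<Rightarrow> 'b::real_normed_vector) \<Rightarrow> bool" where
  "smooth_closure \<Omega> f \<longleftrightarrow> (\<exists>U. open U \<and> closure \<Omega> \<subseteq> U \<and> smooth_on U f)"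

definition smooth_bounded_domain :: "(real \<times> real) set \<Rightarrow> bool" where
  "smooth_bounded_domain \<Omega> \<longleftrightarrow> open \<Omega> \<and> bounded \<Omega> \<and> connected \<Omega> \<and> \<Omega> \<noteq> {} \<and>
     (\<forall>p\<in>frontier \<Omega>. \<exists>U \<phi>. open U \<and> p \<in> U \<and> smooth_on U (\<phi> :: real \<times> real \<Rightarrow> real) \<and>
        (\<forall>x\<in>U. (pd1 \<phi> x, pd2 \<phi> x) \<noteq> (0, 0)) \<and>
        \<Omega> \<inter> U = {x\<in>U. \<phi> x < 0})"

text \<open>Test functions: complex-valued C^1 functions with compact support inside Omega
  (dense in H^1_0(Omega)).\<close>
definition test_fun :: "(real \<times> real) set \<Rightarrow> (real \<times> real \<Rightarrow> complex) \<Rightarrow> bool" where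
  "test_fun \<Omega> u \<longleftrightarrow> Ck_on 1 UNIV u \<and> compact (closure {x. u x \<noteq> 0}) \<and>
     closure {x. u x \<noteq> 0} \<subseteq> \<Omega>"

text \<open>Rayleigh quotient of the Pauli operator (hD - A)^2 - hB, D = -i nabla.\<close>
definition pauli_quotient ::
  "real \<Rightarrow> (real \<times> real \<Rightarrow> real) \<Rightarrow> (real \<times> real \<Rightarrow> real) \<Rightarrow> (real \<times> real \<Rightarrow> real)
    \<Rightarrow> (real \<times> real) set \<Rightarrow> (real \<times> real \<Rightarrow> complex) \<Rightarrow> real" where
  "pauli_quotient h A1 A2 B \<Omega> u =
     (integral \<Omega> (\<lambda>x. (cmod (- \<i> * complex_of_real h * pd1 u x - complex_of_real (A1 x) * u x))\<^sup>2
                      + (cmod (- \<i> * complex_of_real h * pd2 u x - complex_of_real (A2 x) * u x))\<^sup>2)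
      - h * integral \<Omega> (\<lambda>x. B x * (cmod (u x))\<^sup>2))
     / integral \<Omega> (\<lambda>x. (cmod (u x))\<^sup>2)"

definition pauli_lambda ::
  "real \<Rightarrow> (real \<times> real \<Rightarrow> real) \<Rightarrow> (real \<times> real \<Rightarrow> real) \<Rightarrow> (real \<times> real \<Rightarrow> real)
    \<Rightarrow> (real \<times> real) set \<Rightarrow> real" where
  "pauli_lambda h A1 A2 B \<Omega> =
     Inf {pauli_quotient h A1 A2 B \<Omega> u | u. test_fun \<Omega> u \<and> (\<exists>x. u x \<noteq> 0)}"

end

theory Submission
  imports Defs
begin

lemma pd1_eq: "(f has_derivative f') (at x) \<Longrightarrow> pd1 f x = f' (1,0)"
  unfolding pd1_def by (metis frechet_derivative_at)
lemma pd2_eq: "(f has_derivative f') (at x) \<Longrightarrow> pd2 f x = f' (0,1)"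
  unfolding pd2_def by (metis frechet_derivative_at)

lemma has_derivative_pd:
  assumes "f differentiable (at x)"
  shows "(f has_derivative (\<lambda>v. fst v *\<^sub>R pd1 f x + snd v *\<^sub>R pd2 f x)) (at x)"
proof -
  from assms have d: "(f has_derivative frechet_derivative f (at x)) (at x)"
    by (simp add: frechet_derivative_works)
  have lin: "linear (frechet_derivative f (at x))" using d has_derivative_linear by blast
  have "frechet_derivative f (at x) v = fst v *\<^sub>R pd1 f x + snd v *\<^sub>R pd2 f x" for v
  proof -
    have "v = fst v *\<^sub>R (1,0) + snd v *\<^sub>R (0,1)" by (cases v) auto
    then have "frechet_derivative f (at x) v = frechet_derivative f (at x) (fst v *\<^sub>R (1,0) + snd v *\<^sub>R (0,1))" by simp
    also have "\<dots> = fst v *\<^sub>R frechet_derivative f (at x) (1,0) + snd v *\<^sub>R frechet_derivative f (at x) (0,1)"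
      by (simp only: linear_add[OF lin] linear_scale[OF lin])
    finally show ?thesis by (simp add: pd1_def pd2_def)
  qed
  with d show ?thesis by (metis (no_types, lifting) ext)
qed

lemma has_derivative_zero_near:
  assumes "open S" "x \<in> S" "\<And>y. y \<in> S \<Longrightarrow> f y = 0"
  shows "(f has_derivative (\<lambda>v. 0)) (at x)"
  by (rule has_derivative_transform_within_open[OF has_derivative_const[of 0] assms(1,2)]) (use assms(3) in auto)

lemma pd_zero_near:
  assumes "open S" "x \<in> S" "\<And>y. y \<in> S \<Longrightarrow> f y = 0"
  shows "pd1 f x = 0" "pd2 f x = 0" "f differentiable (at x)"
proof -
  have d: "(f has_derivative (\<lambda>v. 0)) (at x)" by (rule has_derivative_zero_near[OF assms])
  show "pd1 f x = 0" using pd1_eq[OF d] by simp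
  show "pd2 f x = 0" using pd2_eq[OF d] by simp
  show "f differentiable (at x)" using d by (rule differentiableI)
qed

lemma open_compl_compact: "compact (K::(real\<times>real) set) \<Longrightarrow> open (- K)"
  using compact_imp_closed open_Compl by blast

lemma pd_zero_out:
  assumes "compact K" "\<And>y. y \<notin> K \<Longrightarrow> f y = 0" "x \<notin> K"
  shows "pd1 f x = 0" "pd2 f x = 0" "f differentiable (at x)"
proof -
  have o: "open (- K)" using assms(1) by (rule open_compl_compact)
  have x: "x \<in> - K" using assms(3) by simp
  have z: "\<And>y. y \<in> - K \<Longrightarrow> f y = 0" using assms(2) by simp
  show "pd1 f x = 0" "pd2 f x = 0" "f differentiable (at x)"
    using pd_zero_near[OF o x z] by auto
qed

definition C1 :: "(real \<times> real) set \<Rightarrow> (real \<times> real \<Rightarrow> 'b::real_normed_vector) \<Rightarrow> bool" where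
  "C1 V f \<longleftrightarrow> (\<forall>x\<in>V. f differentiable (at x)) \<and> continuous_on V f \<and>
     continuous_on V (pd1 f) \<and> continuous_on V (pd2 f)"

lemma Ck1_C1: "Ck_on 1 V f = C1 V f"
  by (auto simp: C1_def)

lemma cont_glue:
  fixes V :: "(real \<times> real) set"
  assumes "open V" "compact K" "K \<subseteq> V" "continuous_on V \<phi>" "\<And>x. x \<notin> K \<Longrightarrow> \<phi> x = 0"
  shows "continuous_on UNIV \<phi>"
proof -
  have o: "open (- K)" using assms(2) by (rule open_compl_compact)
  have "continuous_on (-K) \<phi>"
    by (rule continuous_on_cong[THEN iffD1, OF refl _ continuous_on_const[of _ 0]]) (use assms(5) in auto)
  then have "continuous_on (V \<union> -K) \<phi>" using continuous_on_open_Un[OF assms(1) o assms(4)] by blast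
  moreover have "V \<union> -K = UNIV" using assms(3) by auto
  ultimately show ?thesis by simp
qed

lemma int_glue:
  fixes \<phi> :: "real \<times> real \<Rightarrow> 'a::banach"
  assumes "open V" "compact K" "K \<subseteq> V" "continuous_on V \<phi>" "\<And>x. x \<notin> K \<Longrightarrow> \<phi> x = 0"
  shows "\<phi> integrable_on UNIV"
proof -
  have c: "continuous_on UNIV \<phi>" by (rule cont_glue[OF assms])
  obtain a where a: "K \<subseteq> cbox (-a) a" using bounded_subset_cbox_symmetric compact_imp_bounded assms(2) by blast
  have "\<phi> integrable_on cbox (-a) a" using integrable_continuous continuous_on_subset[OF c] by blast
  then show ?thesis by (rule integrable_on_superset) (use a assms(5) in auto)
qed

lemma integral_UNIV_eq:
  fixes \<phi> :: "real \<times> real \<Rightarrow> 'a::banach"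
  assumes "\<And>x. x \<notin> S \<Longrightarrow> \<phi> x = 0"
  shows "integral S \<phi> = integral UNIV \<phi>"
proof -
  have "(\<lambda>x. if x \<in> S then \<phi> x else 0) = \<phi>" using assms by auto
  then show ?thesis using integral_restrict_UNIV[of S \<phi>] by simp
qed

lemma core1:
  fixes F :: "real \<times> real \<Rightarrow> real"
  assumes d: "\<And>x. F differentiable (at x)" and c: "continuous_on UNIV (pd1 F)"
    and K: "compact K" "\<And>x. x \<notin> K \<Longrightarrow> F x = 0"
  shows "integral UNIV (pd1 F) = 0"
proof -
  obtain a where a: "K \<subseteq> cbox (-a) a" using bounded_subset_cbox_symmetric compact_imp_bounded K(1) by blast
  obtain a1 a2 where a12: "a = (a1,a2)" by (cases a)
  define c1 where "c1 = \<bar>a1\<bar> + 1"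
  define c2 where "c2 = \<bar>a2\<bar> + 1"
  have Ka: "K \<subseteq> {-a1..a1} \<times> {-a2..a2}" using a unfolding a12 by (simp add: cbox_Pair_eq)
  have z: "pd1 F x = 0" if "x \<notin> cbox (-c1,-c2) (c1,c2)" for x
  proof -
    have "x \<notin> K" using that Ka unfolding c1_def c2_def cbox_Pair_eq by auto
    then show ?thesis using pd_zero_out(1)[of K F x] K by blast
  qed
  have "integral UNIV (pd1 F) = integral (cbox (-c1,-c2) (c1,c2)) (pd1 F)"
    using integral_UNIV_eq[of "cbox (-c1,-c2) (c1,c2)" "pd1 F"] z by simp
  also have "\<dots> = integral (cbox (-c1) c1) (\<lambda>x. integral (cbox (-c2) c2) (\<lambda>y. pd1 F (x,y)))"
    by (rule integral_prod_continuous) (rule continuous_on_subset[OF c], simp)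
  also have "\<dots> = integral (cbox (-c2) c2) (\<lambda>y. integral (cbox (-c1) c1) (\<lambda>x. pd1 F (x,y)))"
  proof (rule integral_swap_continuous)
    have "(\<lambda>(x, y). pd1 F (x, y)) = pd1 F" by auto
    then show "continuous_on (cbox (- c1, - c2) (c1, c2)) (\<lambda>(x, y). pd1 F (x, y))"
      using continuous_on_subset[OF c] by simp
  qed
  also have "\<dots> = integral (cbox (-c2) c2) (\<lambda>y. 0)"
  proof (rule integral_cong)
    fix y
    have der: "((\<lambda>t. F (t,y)) has_vector_derivative pd1 F (t,y)) (at t within {-c1..c1})" for t
    proof -
      have h1: "((\<lambda>t. (t,y)) has_derivative (\<lambda>s. (s,0))) (at t)"
        by (auto intro!: derivative_eq_intros)
      have "((\<lambda>t. F (t,y)) has_derivative (\<lambda>s. fst (s,0::real) *\<^sub>R pd1 F (t,y) + snd (s,0::real) *\<^sub>R pd2 F (t,y))) (at t)"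
        using has_derivative_compose[OF h1 has_derivative_pd[OF d]] by simp
      then have "((\<lambda>t. F (t,y)) has_derivative (\<lambda>s. s *\<^sub>R pd1 F (t,y))) (at t)" by simp
      then show ?thesis unfolding has_vector_derivative_def by (rule has_derivative_at_withinI)
    qed
    have "(c1, y) \<notin> K" "(-c1, y) \<notin> K" using Ka unfolding c1_def by (auto simp: subset_iff abs_if split: if_splits, force+)
    then have "F (c1,y) = 0" "F (-c1,y) = 0" using K(2) by blast+
    moreover have "-c1 \<le> c1" using Ka unfolding c1_def by auto
    ultimately show "integral (cbox (-c1) c1) (\<lambda>x. pd1 F (x,y)) = 0"
      using fundamental_theorem_of_calculus[OF \<open>-c1 \<le> c1\<close> der] by (simp add: integral_unique)
  qed
  finally show ?thesis by simp
qed

lemma core2: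
  fixes F :: "real \<times> real \<Rightarrow> real"
  assumes d: "\<And>x. F differentiable (at x)" and c: "continuous_on UNIV (pd2 F)"
    and K: "compact K" "\<And>x. x \<notin> K \<Longrightarrow> F x = 0"
  shows "integral UNIV (pd2 F) = 0"
proof -
  obtain a where a: "K \<subseteq> cbox (-a) a" using bounded_subset_cbox_symmetric compact_imp_bounded K(1) by blast
  obtain a1 a2 where a12: "a = (a1,a2)" by (cases a)
  define c1 where "c1 = \<bar>a1\<bar> + 1"
  define c2 where "c2 = \<bar>a2\<bar> + 1"
  have Ka: "K \<subseteq> {-a1..a1} \<times> {-a2..a2}" using a unfolding a12 by (simp add: cbox_Pair_eq)
  have z: "pd2 F x = 0" if "x \<notin> cbox (-c1,-c2) (c1,c2)" for x
  proof -
    have "x \<notin> K" using that Ka unfolding c1_def c2_def cbox_Pair_eq by auto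
    then show ?thesis using pd_zero_out(2)[of K F x] K by blast
  qed
  have "integral UNIV (pd2 F) = integral (cbox (-c1,-c2) (c1,c2)) (pd2 F)"
    using integral_UNIV_eq[of "cbox (-c1,-c2) (c1,c2)" "pd2 F"] z by simp
  also have "\<dots> = integral (cbox (-c1) c1) (\<lambda>x. integral (cbox (-c2) c2) (\<lambda>y. pd2 F (x,y)))"
    by (rule integral_prod_continuous) (rule continuous_on_subset[OF c], simp)
  also have "\<dots> = integral (cbox (-c1) c1) (\<lambda>y. 0)"
  proof (rule integral_cong)
    fix x
    have der: "((\<lambda>t. F (x,t)) has_vector_derivative pd2 F (x,t)) (at t within {-c2..c2})" for t
    proof -
      have h1: "((\<lambda>t. (x,t)) has_derivative (\<lambda>s. (0,s))) (at t)"
        by (auto intro!: derivative_eq_intros)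
      have "((\<lambda>t. F (x,t)) has_derivative (\<lambda>s. fst (0::real,s) *\<^sub>R pd1 F (x,t) + snd (0::real,s) *\<^sub>R pd2 F (x,t))) (at t)"
        using has_derivative_compose[OF h1 has_derivative_pd[OF d]] by simp
      then have "((\<lambda>t. F (x,t)) has_derivative (\<lambda>s. s *\<^sub>R pd2 F (x,t))) (at t)" by simp
      then show ?thesis unfolding has_vector_derivative_def by (rule has_derivative_at_withinI)
    qed
    have "(x, c2) \<notin> K" "(x, -c2) \<notin> K" using Ka unfolding c2_def by (auto simp: subset_iff abs_if split: if_splits, force+)
    then have "F (x,c2) = 0" "F (x,-c2) = 0" using K(2) by blast+
    moreover have "-c2 \<le> c2" unfolding c2_def by auto
    ultimately show "integral (cbox (-c2) c2) (\<lambda>y. pd2 F (x,y)) = 0"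
      using fundamental_theorem_of_calculus[OF \<open>-c2 \<le> c2\<close> der] by (simp add: integral_unique)
  qed
  finally show ?thesis by simp
qed

lemma prod_pd:
  fixes f g :: "real \<times> real \<Rightarrow> real"
  assumes "f differentiable (at x)" "g differentiable (at x)"
  shows "pd1 (\<lambda>x. f x * g x) x = pd1 f x * g x + f x * pd1 g x"
    "pd2 (\<lambda>x. f x * g x) x = pd2 f x * g x + f x * pd2 g x"
    "(\<lambda>x. f x * g x) differentiable (at x)"
proof -
  have d: "((\<lambda>x. f x * g x) has_derivative
     (\<lambda>v. f x * (fst v *\<^sub>R pd1 g x + snd v *\<^sub>R pd2 g x) + (fst v *\<^sub>R pd1 f x + snd v *\<^sub>R pd2 f x) * g x)) (at x)"
    by (rule has_derivative_mult[OF has_derivative_pd[OF assms(1)] has_derivative_pd[OF assms(2)]])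
  show "pd1 (\<lambda>x. f x * g x) x = pd1 f x * g x + f x * pd1 g x" using pd1_eq[OF d] by simp
  show "pd2 (\<lambda>x. f x * g x) x = pd2 f x * g x + f x * pd2 g x" using pd2_eq[OF d] by simp
  show "(\<lambda>x. f x * g x) differentiable (at x)" using d by (rule differentiableI)
qed

lemma ibp:
  fixes f g :: "real \<times> real \<Rightarrow> real"
  assumes V: "open V" and K: "compact K" "K \<subseteq> V" and fz: "\<And>x. x \<notin> K \<Longrightarrow> f x = 0"
    and f: "C1 UNIV f" and g: "C1 V g"
  shows "integral UNIV (\<lambda>x. g x * pd1 f x) = - integral UNIV (\<lambda>x. f x * pd1 g x)"
    "integral UNIV (\<lambda>x. g x * pd2 f x) = - integral UNIV (\<lambda>x. f x * pd2 g x)"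
    "(\<lambda>x. g x * pd1 f x) integrable_on UNIV" "(\<lambda>x. f x * pd1 g x) integrable_on UNIV"
    "(\<lambda>x. g x * pd2 f x) integrable_on UNIV" "(\<lambda>x. f x * pd2 g x) integrable_on UNIV"
proof -
  define F where "F = (\<lambda>x. f x * g x)"
  have Fz: "F x = 0" if "x \<notin> K" for x using fz that unfolding F_def by simp
  have fd: "f differentiable (at x)" for x using f unfolding C1_def by blast
  have gd: "g differentiable (at x)" if "x \<in> V" for x using g that unfolding C1_def by auto
  have f0: "pd1 f x = 0" "pd2 f x = 0" if "x \<notin> K" for x using pd_zero_out[of K f x] K fz that by auto
  have Fd: "F differentiable (at x)" for x
  proof (cases "x \<in> V")
    case True then show ?thesis unfolding F_def using prod_pd(3)[OF fd gd] by simp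
  next
    case False then have "x \<notin> K" using K by auto
    then show ?thesis using pd_zero_out(3)[of K F x] K Fz by blast
  qed
  have Fp1: "pd1 F x = g x * pd1 f x + f x * pd1 g x" for x
  proof (cases "x \<in> V")
    case True then show ?thesis unfolding F_def using prod_pd(1)[OF fd gd] by simp
  next
    case False then have "x \<notin> K" using K by auto
    then show ?thesis using pd_zero_out(1)[of K F x] K Fz fz f0 by simp
  qed
  have Fp2: "pd2 F x = g x * pd2 f x + f x * pd2 g x" for x
  proof (cases "x \<in> V")
    case True then show ?thesis unfolding F_def using prod_pd(2)[OF fd gd] by simp
  next
    case False then have "x \<notin> K" using K by auto
    then show ?thesis using pd_zero_out(2)[of K F x] K Fz fz f0 by simp
  qed
  have cf: "continuous_on V f" "continuous_on V (pd1 f)" "continuous_on V (pd2 f)"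
    using f unfolding C1_def by (auto intro: continuous_on_subset)
  have cg: "continuous_on V g" "continuous_on V (pd1 g)" "continuous_on V (pd2 g)"
    using g unfolding C1_def by auto
  have i1: "(\<lambda>x. g x * pd1 f x) integrable_on UNIV"
    by (rule int_glue[OF V K]) (auto intro!: continuous_intros cf cg simp: f0)
  have i2: "(\<lambda>x. f x * pd1 g x) integrable_on UNIV"
    by (rule int_glue[OF V K]) (auto intro!: continuous_intros cf cg simp: fz)
  have i3: "(\<lambda>x. g x * pd2 f x) integrable_on UNIV"
    by (rule int_glue[OF V K]) (auto intro!: continuous_intros cf cg simp: f0)
  have i4: "(\<lambda>x. f x * pd2 g x) integrable_on UNIV"
    by (rule int_glue[OF V K]) (auto intro!: continuous_intros cf cg simp: fz)
  have c1: "continuous_on UNIV (pd1 F)" unfolding Fp1[abs_def]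
    by (rule cont_glue[OF V K]) (auto intro!: continuous_intros cf cg simp: f0 fz)
  have c2: "continuous_on UNIV (pd2 F)" unfolding Fp2[abs_def]
    by (rule cont_glue[OF V K]) (auto intro!: continuous_intros cf cg simp: f0 fz)
  have "integral UNIV (pd1 F) = 0" by (rule core1[OF Fd c1 K(1) Fz])
  then have "integral UNIV (\<lambda>x. g x * pd1 f x + f x * pd1 g x) = 0" unfolding Fp1[abs_def] .
  then show "integral UNIV (\<lambda>x. g x * pd1 f x) = - integral UNIV (\<lambda>x. f x * pd1 g x)"
    using integral_add[OF i1 i2] by simp
  have "integral UNIV (pd2 F) = 0" by (rule core2[OF Fd c2 K(1) Fz])
  then have "integral UNIV (\<lambda>x. g x * pd2 f x + f x * pd2 g x) = 0" unfolding Fp2[abs_def] .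
  then show "integral UNIV (\<lambda>x. g x * pd2 f x) = - integral UNIV (\<lambda>x. f x * pd2 g x)"
    using integral_add[OF i3 i4] by simp
  show "(\<lambda>x. g x * pd1 f x) integrable_on UNIV" "(\<lambda>x. f x * pd1 g x) integrable_on UNIV"
    "(\<lambda>x. g x * pd2 f x) integrable_on UNIV" "(\<lambda>x. f x * pd2 g x) integrable_on UNIV"
    using i1 i2 i3 i4 .
qed

lemma cont_comp_UNIV:
  "continuous_on UNIV f \<Longrightarrow> continuous_on S g \<Longrightarrow> continuous_on S (\<lambda>x. f (g x))"
  using continuous_on_compose2[of UNIV f S g] by auto

lemma translation_integral:
  fixes \<phi> :: "real \<times> real \<Rightarrow> real"
  assumes c: "continuous_on UNIV \<phi>" and K: "compact K" "\<And>x. x \<notin> K \<Longrightarrow> \<phi> x = 0"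
  shows "integral UNIV (\<lambda>x. \<phi> (\<tau> + x)) = integral UNIV \<phi>"
proof -
  have "compact ((\<lambda>x. x - \<tau>) ` K)" using K(1) by (intro compact_continuous_image) (auto intro!: continuous_intros)
  then obtain a where a: "(\<lambda>x. x - \<tau>) ` K \<subseteq> cbox (-a) a"
    using bounded_subset_cbox_symmetric compact_imp_bounded by blast
  have z1: "\<phi> (\<tau> + x) = 0" if "x \<notin> cbox (-a) a" for x
  proof -
    have "\<tau> + x \<notin> K" using a that by (force simp: image_iff)
    then show ?thesis using K(2) by blast
  qed
  have z2: "\<phi> x = 0" if "x \<notin> cbox (-a + \<tau>) (a + \<tau>)" for x
  proof -
    have "x - \<tau> \<notin> cbox (-a) a" using that by (simp add: mem_box algebra_simps)
    then have "x \<notin> K" using a by blast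
    then show ?thesis using K(2) by blast
  qed
  have i: "(\<phi> has_integral integral (cbox (-a + \<tau>) (a + \<tau>)) \<phi>) (cbox (-a + \<tau>) (a + \<tau>))"
    using integrable_continuous[OF continuous_on_subset[OF c]] by blast
  have "((\<phi> \<circ> (+) \<tau>) has_integral integral (cbox (-a + \<tau>) (a + \<tau>)) \<phi>) (cbox (-a) a)"
    using has_integral_shift_cbox_iff[of \<phi> \<tau>] i by blast
  then have "integral (cbox (-a) a) (\<lambda>x. \<phi> (\<tau> + x)) = integral (cbox (-a + \<tau>) (a + \<tau>)) \<phi>"
    by (simp add: integral_unique o_def)
  moreover have "integral UNIV (\<lambda>x. \<phi> (\<tau> + x)) = integral (cbox (-a) a) (\<lambda>x. \<phi> (\<tau> + x))"
    using integral_UNIV_eq[of "cbox (-a) a" "\<lambda>x. \<phi> (\<tau> + x)"] z1 by simp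
  moreover have "integral UNIV \<phi> = integral (cbox (-a + \<tau>) (a + \<tau>)) \<phi>"
    using integral_UNIV_eq[of "cbox (-a + \<tau>) (a + \<tau>)" \<phi>] z2 by simp
  ultimately show ?thesis by simp
qed

lemma ucont_cs:
  fixes \<phi> :: "real \<times> real \<Rightarrow> real"
  assumes c: "continuous_on UNIV \<phi>" and K: "compact K" "\<And>x. x \<notin> K \<Longrightarrow> \<phi> x = 0"
    and e: "e > 0"
  shows "\<exists>d>0. \<forall>x y. dist x y < d \<longrightarrow> \<bar>\<phi> x - \<phi> y\<bar> < e"
proof -
  obtain r where r: "\<forall>x\<in>K. norm x \<le> r" using compact_imp_bounded[OF K(1)] bounded_iff by blast
  define C where "C = cball (0::real\<times>real) (\<bar>r\<bar> + 1)"
  have "uniformly_continuous_on C \<phi>" unfolding C_def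
    by (rule compact_uniformly_continuous[OF continuous_on_subset[OF c]]) auto
  then obtain d where d: "d > 0" "\<forall>x\<in>C. \<forall>x'\<in>C. dist x' x < d \<longrightarrow> dist (\<phi> x') (\<phi> x) < e"
    unfolding uniformly_continuous_on_def using e by blast
  have out: "\<phi> x = 0 \<and> \<phi> y = 0" if "x \<notin> C" "dist x y < 1" for x y
  proof -
    have "norm x > \<bar>r\<bar> + 1" using that(1) unfolding C_def by (simp add: dist_norm)
    moreover have "norm x \<le> norm y + dist x y" by (metis dist_commute dist_norm norm_triangle_sub add.commute)
    ultimately have "norm y > \<bar>r\<bar>" "norm x > \<bar>r\<bar>" using that(2) by linarith+
    then have "x \<notin> K" "y \<notin> K" using r by force+
    then show ?thesis using K(2) by blast
  qed
  show ?thesis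
  proof (intro exI[of _ "min d 1"] conjI allI impI)
    show "min d 1 > 0" using d by simp
    fix x y :: "real \<times> real" assume xy: "dist x y < min d 1"
    show "\<bar>\<phi> x - \<phi> y\<bar> < e"
    proof (cases "x \<in> C \<and> y \<in> C")
      case True then show ?thesis using d(2) xy by (auto simp: dist_real_def dist_commute)
    next
      case False
      then consider "x \<notin> C" | "y \<notin> C" by blast
      then show ?thesis
      proof cases
        case 1 then show ?thesis using out[of x y] xy e by simp
      next
        case 2 then show ?thesis using out[of y x] xy e by (simp add: dist_commute)
      qed
    qed
  qed
qed

lemma line_deriv1:
  assumes d: "\<And>x. F differentiable (at x)"
  shows "((\<lambda>s. F (x + (s,0))) has_derivative (\<lambda>h. h *\<^sub>R pd1 F (x + (s,0)))) (at s)"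
proof -
  have h1: "((\<lambda>s. x + (s,0)) has_derivative (\<lambda>h. (h,0))) (at s)"
    by (auto intro!: derivative_eq_intros)
  have "((\<lambda>s. F (x + (s,0))) has_derivative (\<lambda>h. fst (h,0::real) *\<^sub>R pd1 F (x + (s,0)) + snd (h,0::real) *\<^sub>R pd2 F (x + (s,0)))) (at s)"
    using has_derivative_compose[OF h1 has_derivative_pd[OF d]] by simp
  then show ?thesis by simp
qed

lemma mvt_line1:
  fixes F :: "real \<times> real \<Rightarrow> real"
  assumes d: "\<And>x. F differentiable (at x)"
  shows "\<exists>z. \<bar>z\<bar> \<le> \<bar>t\<bar> \<and> F (x + (t,0)) - F x = t * pd1 F (x + (z,0))"
proof (cases "t \<ge> 0")
  case True
  have "\<exists>z\<in>{0..t}. F (x + (t,0)) - F (x + (0,0)) = (\<lambda>h. h *\<^sub>R pd1 F (x + (z,0))) (t - 0)"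
    by (rule mvt_very_simple[OF True]) (rule has_derivative_at_withinI[OF line_deriv1[OF d]])
  then obtain z where "z \<in> {0..t}" "F (x + (t,0)) - F x = t * pd1 F (x + (z,0))" by (auto simp flip: zero_prod_def)
  then show ?thesis using True by (intro exI[of _ z]) auto
next
  case False
  have "\<exists>z\<in>{t..0}. F (x + (0,0)) - F (x + (t,0)) = (\<lambda>h. h *\<^sub>R pd1 F (x + (z,0))) (0 - t)"
    using False by (intro mvt_very_simple) (simp, rule has_derivative_at_withinI[OF line_deriv1[OF d]])
  then obtain z where "z \<in> {t..0}" "F x - F (x + (t,0)) = (0 - t) * pd1 F (x + (z,0))" by (auto simp flip: zero_prod_def)
  then show ?thesis using False by (intro exI[of _ z]) (auto simp: algebra_simps)
qed

lemma dq_unif: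
  fixes F :: "real \<times> real \<Rightarrow> real"
  assumes F: "C1 UNIV F" and K: "compact K" "\<And>x. x \<notin> K \<Longrightarrow> F x = 0" and e: "e > 0"
  shows "\<exists>d>0. \<forall>t x. t \<noteq> 0 \<and> \<bar>t\<bar> < d \<longrightarrow> \<bar>(F (x + (t,0)) - F x) / t - pd1 F x\<bar> < e"
proof -
  have d: "\<And>x. F differentiable (at x)" using F unfolding C1_def by blast
  have c: "continuous_on UNIV (pd1 F)" using F unfolding C1_def by blast
  obtain dl where dl: "dl > 0" "\<forall>x y. dist x y < dl \<longrightarrow> \<bar>pd1 F x - pd1 F y\<bar> < e"
    using ucont_cs[OF c K(1) _ e] pd_zero_out(1)[of K F] K by blast
  show ?thesis
  proof (intro exI[of _ dl] conjI allI impI)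
    show "dl > 0" by (rule dl(1))
    fix t x assume t: "t \<noteq> 0 \<and> \<bar>t\<bar> < dl"
    obtain z where z: "\<bar>z\<bar> \<le> \<bar>t\<bar>" "F (x + (t,0)) - F x = t * pd1 F (x + (z,0))"
      using mvt_line1[OF d] by blast
    have "(F (x + (t,0)) - F x) / t = pd1 F (x + (z,0))" using z(2) t by simp
    moreover have "dist (x + (z,0)) x < dl" using z(1) t by (simp add: dist_norm)
    moreover have "\<bar>pd1 F (x + (z,0)) - pd1 F x\<bar> < e" using dl(2) calculation(2) by blast
    ultimately show "\<bar>(F (x + (t,0)) - F x) / t - pd1 F x\<bar> < e" by simp
  qed
qed

lemma shift_pd:
  fixes F :: "real \<times> real \<Rightarrow> 'b::real_normed_vector"
  assumes d: "\<And>x. F differentiable (at x)"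
  shows "(\<lambda>x. F (x + \<sigma>)) differentiable (at x)"
    "pd1 (\<lambda>x. F (x + \<sigma>)) x = pd1 F (x + \<sigma>)" "pd2 (\<lambda>x. F (x + \<sigma>)) x = pd2 F (x + \<sigma>)"
proof -
  have h1: "((\<lambda>x. x + \<sigma>) has_derivative (\<lambda>h. h)) (at x)"
    by (auto intro!: derivative_eq_intros)
  have D: "((\<lambda>x. F (x + \<sigma>)) has_derivative (\<lambda>v. fst v *\<^sub>R pd1 F (x + \<sigma>) + snd v *\<^sub>R pd2 F (x + \<sigma>))) (at x)"
    using has_derivative_compose[OF h1 has_derivative_pd[OF d]] by simp
  show "(\<lambda>x. F (x + \<sigma>)) differentiable (at x)" using D by (rule differentiableI)
  show "pd1 (\<lambda>x. F (x + \<sigma>)) x = pd1 F (x + \<sigma>)" using pd1_eq[OF D] by simp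
  show "pd2 (\<lambda>x. F (x + \<sigma>)) x = pd2 F (x + \<sigma>)" using pd2_eq[OF D] by simp
qed

lemma lin_pd:
  fixes f g :: "real \<times> real \<Rightarrow> real"
  assumes "f differentiable (at x)" "g differentiable (at x)"
  shows "(\<lambda>x. (f x - g x) / c) differentiable (at x)"
    "pd1 (\<lambda>x. (f x - g x) / c) x = (pd1 f x - pd1 g x) / c"
    "pd2 (\<lambda>x. (f x - g x) / c) x = (pd2 f x - pd2 g x) / c"
proof -
  have D: "((\<lambda>x. (f x - g x) / c) has_derivative
     (\<lambda>v. ((fst v *\<^sub>R pd1 f x + snd v *\<^sub>R pd2 f x) - (fst v *\<^sub>R pd1 g x + snd v *\<^sub>R pd2 g x)) / c)) (at x)"
    using has_derivative_mult_left[OF has_derivative_diff[OF has_derivative_pd[OF assms(1)] has_derivative_pd[OF assms(2)]], of "inverse c"]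
    by (simp add: divide_inverse)
  show "(\<lambda>x. (f x - g x) / c) differentiable (at x)" using D by (rule differentiableI)
  show "pd1 (\<lambda>x. (f x - g x) / c) x = (pd1 f x - pd1 g x) / c" using pd1_eq[OF D] by simp
  show "pd2 (\<lambda>x. (f x - g x) / c) x = (pd2 f x - pd2 g x) / c" using pd2_eq[OF D] by simp
qed

lemma jac:
  fixes R I :: "real \<times> real \<Rightarrow> real"
  assumes R: "C1 UNIV R" and I: "C1 UNIV I" and K: "compact K"
    and Rz: "\<And>x. x \<notin> K \<Longrightarrow> R x = 0" and Iz: "\<And>x. x \<notin> K \<Longrightarrow> I x = 0"
  shows "integral UNIV (\<lambda>x. pd1 R x * pd2 I x) = integral UNIV (\<lambda>x. pd2 R x * pd1 I x)"
proof -
  have dR: "\<And>x. R differentiable (at x)" and cR: "continuous_on UNIV R"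
    and cR1: "continuous_on UNIV (pd1 R)" and cR2: "continuous_on UNIV (pd2 R)"
    using R unfolding C1_def by blast+
  have dI: "\<And>x. I differentiable (at x)" and cI: "continuous_on UNIV I"
    and cI1: "continuous_on UNIV (pd1 I)" and cI2: "continuous_on UNIV (pd2 I)"
    using I unfolding C1_def by blast+
  have R1z: "pd1 R x = 0" and R2z: "pd2 R x = 0" if "x \<notin> K" for x using pd_zero_out[of K R x] K Rz that by auto
  have I1z: "pd1 I x = 0" and I2z: "pd2 I x = 0" if "x \<notin> K" for x using pd_zero_out[of K I x] K Iz that by auto
  define J1 where "J1 = integral UNIV (\<lambda>x. pd1 R x * pd2 I x)"
  define J2 where "J2 = integral UNIV (\<lambda>x. pd2 R x * pd1 I x)"
  define A where "A = integral UNIV (\<lambda>x. \<bar>pd2 I x\<bar>)"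
  define B where "B = integral UNIV (\<lambda>x. \<bar>pd2 R x\<bar>)"
  have iA: "(\<lambda>x. \<bar>pd2 I x\<bar>) integrable_on UNIV"
    by (rule int_glue[OF open_UNIV K]) (auto intro!: continuous_intros cI2 simp: I2z)
  have iB: "(\<lambda>x. \<bar>pd2 R x\<bar>) integrable_on UNIV"
    by (rule int_glue[OF open_UNIV K]) (auto intro!: continuous_intros cR2 simp: R2z)
  have iJ1: "(\<lambda>x. pd1 R x * pd2 I x) integrable_on UNIV"
    by (rule int_glue[OF open_UNIV K]) (auto intro!: continuous_intros cR1 cI2 simp: I2z)
  have iJ2: "(\<lambda>x. pd2 R x * pd1 I x) integrable_on UNIV"
    by (rule int_glue[OF open_UNIV K]) (auto intro!: continuous_intros cR2 cI1 simp: R2z)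
  have A0: "A \<ge> 0" unfolding A_def by (rule integral_nonneg[OF iA]) auto
  have B0: "B \<ge> 0" unfolding B_def by (rule integral_nonneg[OF iB]) auto
  \<comment> \<open>Step A: discrete integration by parts\<close>
  have stepA: "integral UNIV (\<lambda>x. (R (x + (t,0)) - R x) / t * pd2 I x)
      = integral UNIV (\<lambda>x. pd2 R x * ((I (x + (-t,0)) - I x) / (-t)))" if t0: "t \<noteq> 0" for t
  proof -
    define G where "G = (\<lambda>x. (I (x + (-t,0)) - I x) / (-t))"
    define K' where "K' = K \<union> (\<lambda>x. (t,0) + x) ` K"
    have K': "compact K'" "K \<subseteq> K'" unfolding K'_def using K
      by (auto intro!: compact_Un compact_continuous_image continuous_intros)
    have Gz: "G x = 0" if "x \<notin> K'" for x
    proof -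
      have "x \<notin> K" using that unfolding K'_def by auto
      moreover have "x + (-t,0) \<notin> K"
      proof
        assume "x + (-t,0) \<in> K"
        then have "(t,0) + (x + (-t,0)) \<in> K'" unfolding K'_def by blast
        then show False using that by (cases x) simp
      qed
      ultimately show ?thesis unfolding G_def using Iz by simp
    qed
    have dG: "G differentiable (at x)" and G1: "pd1 G x = (pd1 I (x + (-t,0)) - pd1 I x) / (-t)"
      and G2: "pd2 G x = (pd2 I (x + (-t,0)) - pd2 I x) / (-t)" for x
    proof -
      have "G = (\<lambda>x. ((\<lambda>x. I (x + (-t,0))) x - I x) / (-t))" unfolding G_def by simp
      then show "G differentiable (at x)" "pd1 G x = (pd1 I (x + (-t,0)) - pd1 I x) / (-t)"
        "pd2 G x = (pd2 I (x + (-t,0)) - pd2 I x) / (-t)"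
        using lin_pd[where f="\<lambda>x. I (x + (-t,0))" and g=I and c="-t" and x=x, OF shift_pd(1)[OF dI] dI] shift_pd(2,3)[OF dI] by auto
    qed
    have CG: "C1 UNIV G" unfolding C1_def
    proof (intro conjI ballI)
      show "G differentiable (at x)" for x by (rule dG)
      show "continuous_on UNIV G" unfolding G_def
        by (intro continuous_intros cont_comp_UNIV[OF cI] cI) (use t0 in auto)
      have "pd1 G = (\<lambda>x. (pd1 I (x + (-t,0)) - pd1 I x) / (-t))" using G1 by (rule ext)
      then show "continuous_on UNIV (pd1 G)"
        by simp (intro continuous_intros cont_comp_UNIV[OF cI1] cI1, use t0 in auto)
      have "pd2 G = (\<lambda>x. (pd2 I (x + (-t,0)) - pd2 I x) / (-t))" using G2 by (rule ext)
      then show "continuous_on UNIV (pd2 G)"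
        by simp (intro continuous_intros cont_comp_UNIV[OF cI2] cI2, use t0 in auto)
    qed
    have ibp2: "integral UNIV (\<lambda>x. R x * pd2 G x) = - integral UNIV (\<lambda>x. G x * pd2 R x)"
      using ibp(2)[OF open_UNIV K'(1) subset_UNIV Gz CG R] by simp
    have ia: "(\<lambda>x. R ((t,0) + x) * pd2 I x) integrable_on UNIV"
      by (rule int_glue[OF open_UNIV K]) (auto intro!: continuous_intros cont_comp_UNIV[OF cR] cI2 simp: I2z)
    have ib: "(\<lambda>x. R x * pd2 I x) integrable_on UNIV"
      by (rule int_glue[OF open_UNIV K]) (auto intro!: continuous_intros cR cI2 simp: I2z)
    have ic: "(\<lambda>x. R x * pd2 I (x + (-t,0))) integrable_on UNIV"
      by (rule int_glue[OF open_UNIV K]) (auto intro!: continuous_intros cont_comp_UNIV[OF cI2] cR simp: Rz)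
    have trans: "integral UNIV (\<lambda>x. R ((t,0) + x) * pd2 I x) = integral UNIV (\<lambda>x. R x * pd2 I (x + (-t,0)))"
    proof -
      have "integral UNIV (\<lambda>x. (\<lambda>y. R y * pd2 I (y + (-t,0))) ((t,0) + x)) = integral UNIV (\<lambda>y. R y * pd2 I (y + (-t,0)))"
        by (rule translation_integral[OF _ K]) (auto intro!: continuous_intros cont_comp_UNIV[OF cI2] cR simp: Rz)
      moreover have "(\<lambda>x. (\<lambda>y. R y * pd2 I (y + (-t,0))) ((t,0) + x)) = (\<lambda>x. R ((t,0) + x) * pd2 I x)"
        by (auto simp: algebra_simps)
      ultimately show ?thesis by simp
    qed
    have "integral UNIV (\<lambda>x. (R (x + (t,0)) - R x) / t * pd2 I x)
        = integral UNIV (\<lambda>x. (1/t) * (R ((t,0) + x) * pd2 I x) - (1/t) * (R x * pd2 I x))"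
      by (rule integral_cong) (simp add: algebra_simps diff_divide_distrib)
    also have "\<dots> = (1/t) * integral UNIV (\<lambda>x. R ((t,0) + x) * pd2 I x) - (1/t) * integral UNIV (\<lambda>x. R x * pd2 I x)"
      using integral_diff[OF integrable_on_cmult_left[OF ia, where c="1/t"] integrable_on_cmult_left[OF ib, where c="1/t"]] by simp
    also have "\<dots> = (1/t) * integral UNIV (\<lambda>x. R x * pd2 I (x + (-t,0))) - (1/t) * integral UNIV (\<lambda>x. R x * pd2 I x)"
      using trans by simp
    also have "\<dots> = - ((1/(-t)) * integral UNIV (\<lambda>x. R x * pd2 I (x + (-t,0))) - (1/(-t)) * integral UNIV (\<lambda>x. R x * pd2 I x))"
      by simp
    also have "(1/(-t)) * integral UNIV (\<lambda>x. R x * pd2 I (x + (-t,0))) - (1/(-t)) * integral UNIV (\<lambda>x. R x * pd2 I x)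
        = integral UNIV (\<lambda>x. (1/(-t)) * (R x * pd2 I (x + (-t,0))) - (1/(-t)) * (R x * pd2 I x))"
      using integral_diff[OF integrable_on_cmult_left[OF ic, where c="1/(-t)"] integrable_on_cmult_left[OF ib, where c="1/(-t)"]] by simp
    also have "\<dots> = integral UNIV (\<lambda>x. R x * pd2 G x)"
      by (rule integral_cong) (simp add: G2 algebra_simps diff_divide_distrib)
    also have "- \<dots> = integral UNIV (\<lambda>x. G x * pd2 R x)" using ibp2 by simp
    also have "\<dots> = integral UNIV (\<lambda>x. pd2 R x * ((I (x + (-t,0)) - I x) / (-t)))"
      unfolding G_def by (simp add: mult.commute)
    finally show ?thesis .
  qed
  have bound: "\<bar>J1 - J2\<bar> \<le> e * (A + B)" if e: "e > 0" for e
  proof -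
    obtain d1 where d1: "d1 > 0" "\<forall>t x. t \<noteq> 0 \<and> \<bar>t\<bar> < d1 \<longrightarrow> \<bar>(R (x + (t,0)) - R x) / t - pd1 R x\<bar> < e"
      using dq_unif[OF R K Rz e] by blast
    obtain d2 where d2: "d2 > 0" "\<forall>t x. t \<noteq> 0 \<and> \<bar>t\<bar> < d2 \<longrightarrow> \<bar>(I (x + (t,0)) - I x) / t - pd1 I x\<bar> < e"
      using dq_unif[OF I K Iz e] by blast
    define t where "t = min d1 d2 / 2"
    have t: "t \<noteq> 0" "\<bar>t\<bar> < d1" "\<bar>-t\<bar> < d2" "-t \<noteq> 0" unfolding t_def using d1 d2 by auto
    have b1: "\<bar>(R (x + (t,0)) - R x) / t - pd1 R x\<bar> \<le> e" for x using d1(2) t by (meson less_imp_le)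
    have b2: "\<bar>(I (x + (-t,0)) - I x) / (-t) - pd1 I x\<bar> \<le> e" for x using d2(2) t by (meson less_imp_le)
    define Q1 where "Q1 = (\<lambda>x. (R (x + (t,0)) - R x) / t * pd2 I x)"
    define Q2 where "Q2 = (\<lambda>x. pd2 R x * ((I (x + (-t,0)) - I x) / (-t)))"
    have iQ1: "Q1 integrable_on UNIV" unfolding Q1_def
      by (rule int_glue[OF open_UNIV K]) (auto intro!: continuous_intros cont_comp_UNIV[OF cR] cR cI2 simp: I2z t(1))
    have iQ2: "Q2 integrable_on UNIV" unfolding Q2_def
      by (rule int_glue[OF open_UNIV K]) (auto intro!: continuous_intros cont_comp_UNIV[OF cI] cI cR2 simp: R2z t(1))
    have eqQ: "integral UNIV Q1 = integral UNIV Q2" unfolding Q1_def Q2_def by (rule stepA[OF t(1)])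
    have n1: "\<bar>J1 - integral UNIV Q1\<bar> \<le> e * A"
    proof -
      have "\<bar>J1 - integral UNIV Q1\<bar> = norm (integral UNIV (\<lambda>x. pd1 R x * pd2 I x - Q1 x))"
        unfolding J1_def using integral_diff[OF iJ1 iQ1] by simp
      also have "\<dots> \<le> integral UNIV (\<lambda>x. e * \<bar>pd2 I x\<bar>)"
      proof (rule integral_norm_bound_integral)
        show "(\<lambda>x. pd1 R x * pd2 I x - Q1 x) integrable_on UNIV" using iJ1 iQ1 by (rule integrable_diff)
        show "(\<lambda>x. e * \<bar>pd2 I x\<bar>) integrable_on UNIV" using iA by (rule integrable_on_mult_right)
        fix x
        have "norm (pd1 R x * pd2 I x - Q1 x) = \<bar>pd1 R x - (R (x + (t,0)) - R x) / t\<bar> * \<bar>pd2 I x\<bar>"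
          unfolding Q1_def by (simp add: abs_mult[symmetric] algebra_simps)
        also have "\<dots> \<le> e * \<bar>pd2 I x\<bar>" using b1[of x] by (intro mult_right_mono) (auto simp: abs_minus_commute)
        finally show "norm (pd1 R x * pd2 I x - Q1 x) \<le> e * \<bar>pd2 I x\<bar>" .
      qed
      also have "\<dots> = e * A" unfolding A_def by simp
      finally show ?thesis .
    qed
    have n2: "\<bar>integral UNIV Q2 - J2\<bar> \<le> e * B"
    proof -
      have "\<bar>integral UNIV Q2 - J2\<bar> = norm (integral UNIV (\<lambda>x. Q2 x - pd2 R x * pd1 I x))"
        unfolding J2_def using integral_diff[OF iQ2 iJ2] by simp
      also have "\<dots> \<le> integral UNIV (\<lambda>x. e * \<bar>pd2 R x\<bar>)"
      proof (rule integral_norm_bound_integral)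
        show "(\<lambda>x. Q2 x - pd2 R x * pd1 I x) integrable_on UNIV" using iQ2 iJ2 by (rule integrable_diff)
        show "(\<lambda>x. e * \<bar>pd2 R x\<bar>) integrable_on UNIV" using iB by (rule integrable_on_mult_right)
        fix x
        have "norm (Q2 x - pd2 R x * pd1 I x) = \<bar>(I (x + (-t,0)) - I x) / (-t) - pd1 I x\<bar> * \<bar>pd2 R x\<bar>"
          unfolding Q2_def by (simp add: abs_mult[symmetric] algebra_simps)
        also have "\<dots> \<le> e * \<bar>pd2 R x\<bar>" using b2[of x] by (intro mult_right_mono) auto
        finally show "norm (Q2 x - pd2 R x * pd1 I x) \<le> e * \<bar>pd2 R x\<bar>" .
      qed
      also have "\<dots> = e * B" unfolding B_def by simp
      finally show ?thesis .
    qed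
    show ?thesis using n1 n2 eqQ by (simp add: distrib_left)
  qed
  have "J1 = J2"
  proof (rule ccontr)
    assume ne: "J1 \<noteq> J2"
    define e where "e = \<bar>J1 - J2\<bar> / (A + B + 1)"
    have e0: "e > 0" unfolding e_def using ne A0 B0 by auto
    have "\<bar>J1 - J2\<bar> \<le> e * (A + B)" by (rule bound[OF e0])
    also have "\<dots> < e * (A + B + 1)" using e0 by simp
    also have "\<dots> = \<bar>J1 - J2\<bar>" unfolding e_def using A0 B0 by simp
    finally show False by simp
  qed
  then show ?thesis unfolding J1_def J2_def .
qed

lemma re_pd:
  fixes u :: "real \<times> real \<Rightarrow> complex"
  assumes d: "u differentiable (at x)"
  shows "(\<lambda>x. Re (u x)) differentiable (at x)" "pd1 (\<lambda>x. Re (u x)) x = Re (pd1 u x)"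
    "pd2 (\<lambda>x. Re (u x)) x = Re (pd2 u x)"
    "(\<lambda>x. Im (u x)) differentiable (at x)" "pd1 (\<lambda>x. Im (u x)) x = Im (pd1 u x)"
    "pd2 (\<lambda>x. Im (u x)) x = Im (pd2 u x)"
proof -
  have D: "((\<lambda>x. Re (u x)) has_derivative (\<lambda>v. Re (fst v *\<^sub>R pd1 u x + snd v *\<^sub>R pd2 u x))) (at x)"
    by (rule bounded_linear.has_derivative[OF bounded_linear_Re has_derivative_pd[OF d]])
  have E: "((\<lambda>x. Im (u x)) has_derivative (\<lambda>v. Im (fst v *\<^sub>R pd1 u x + snd v *\<^sub>R pd2 u x))) (at x)"
    by (rule bounded_linear.has_derivative[OF bounded_linear_Im has_derivative_pd[OF d]])
  show "(\<lambda>x. Re (u x)) differentiable (at x)" using D by (rule differentiableI)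
  show "(\<lambda>x. Im (u x)) differentiable (at x)" using E by (rule differentiableI)
  show "pd1 (\<lambda>x. Re (u x)) x = Re (pd1 u x)" using pd1_eq[OF D] by simp
  show "pd2 (\<lambda>x. Re (u x)) x = Re (pd2 u x)" using pd2_eq[OF D] by simp
  show "pd1 (\<lambda>x. Im (u x)) x = Im (pd1 u x)" using pd1_eq[OF E] by simp
  show "pd2 (\<lambda>x. Im (u x)) x = Im (pd2 u x)" using pd2_eq[OF E] by simp
qed

lemma C1_Re:
  fixes u :: "real \<times> real \<Rightarrow> complex"
  assumes V: "open V" and u: "C1 V u"
  shows "C1 V (\<lambda>x. Re (u x))" "C1 V (\<lambda>x. Im (u x))"
proof -
  have d: "\<And>x. x \<in> V \<Longrightarrow> u differentiable (at x)" and c: "continuous_on V u"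
    and c1: "continuous_on V (pd1 u)" and c2: "continuous_on V (pd2 u)" using u unfolding C1_def by blast+
  have "continuous_on V (pd1 (\<lambda>x. Re (u x)))"
    using continuous_on_cong[THEN iffD1, OF refl _ continuous_on_Re[OF c1]] re_pd(2)[OF d] by metis
  moreover have "continuous_on V (pd2 (\<lambda>x. Re (u x)))"
    using continuous_on_cong[THEN iffD1, OF refl _ continuous_on_Re[OF c2]] re_pd(3)[OF d] by metis
  ultimately show "C1 V (\<lambda>x. Re (u x))" unfolding C1_def using re_pd(1)[OF d] continuous_on_Re[OF c] by blast
  have "continuous_on V (pd1 (\<lambda>x. Im (u x)))"
    using continuous_on_cong[THEN iffD1, OF refl _ continuous_on_Im[OF c1]] re_pd(5)[OF d] by metis
  moreover have "continuous_on V (pd2 (\<lambda>x. Im (u x)))"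
    using continuous_on_cong[THEN iffD1, OF refl _ continuous_on_Im[OF c2]] re_pd(6)[OF d] by metis
  ultimately show "C1 V (\<lambda>x. Im (u x))" unfolding C1_def using re_pd(4)[OF d] continuous_on_Im[OF c] by blast
qed

lemma sq_pd:
  fixes R I :: "real \<times> real \<Rightarrow> real"
  assumes "R differentiable (at x)" "I differentiable (at x)"
  shows "(\<lambda>x. R x * R x + I x * I x) differentiable (at x)"
    "pd1 (\<lambda>x. R x * R x + I x * I x) x = 2 * (R x * pd1 R x + I x * pd1 I x)"
    "pd2 (\<lambda>x. R x * R x + I x * I x) x = 2 * (R x * pd2 R x + I x * pd2 I x)"
proof -
  have D: "((\<lambda>x. R x * R x + I x * I x) has_derivative
    (\<lambda>v. R x * (fst v *\<^sub>R pd1 R x + snd v *\<^sub>R pd2 R x) + (fst v *\<^sub>R pd1 R x + snd v *\<^sub>R pd2 R x) * R x +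
         (I x * (fst v *\<^sub>R pd1 I x + snd v *\<^sub>R pd2 I x) + (fst v *\<^sub>R pd1 I x + snd v *\<^sub>R pd2 I x) * I x))) (at x)"
    by (intro has_derivative_add has_derivative_mult has_derivative_pd assms)
  show "(\<lambda>x. R x * R x + I x * I x) differentiable (at x)" using D by (rule differentiableI)
  show "pd1 (\<lambda>x. R x * R x + I x * I x) x = 2 * (R x * pd1 R x + I x * pd1 I x)" using pd1_eq[OF D] by (simp add: algebra_simps)
  show "pd2 (\<lambda>x. R x * R x + I x * I x) x = 2 * (R x * pd2 R x + I x * pd2 I x)" using pd2_eq[OF D] by (simp add: algebra_simps)
qed

definition Pi1 :: "real \<Rightarrow> (real \<times> real \<Rightarrow> real) \<Rightarrow> (real \<times> real \<Rightarrow> complex) \<Rightarrow> real \<times> real \<Rightarrow> complex" where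
  "Pi1 h a u x = - \<i> * complex_of_real h * pd1 u x - complex_of_real (a x) * u x"
definition Pi2 :: "real \<Rightarrow> (real \<times> real \<Rightarrow> real) \<Rightarrow> (real \<times> real \<Rightarrow> complex) \<Rightarrow> real \<times> real \<Rightarrow> complex" where
  "Pi2 h a u x = - \<i> * complex_of_real h * pd2 u x - complex_of_real (a x) * u x"

lemma pw_identity:
  fixes z z1 z2 :: complex and a1 a2 h :: real
  defines "P1 \<equiv> - \<i> * complex_of_real h * z1 - complex_of_real a1 * z"
    and "P2 \<equiv> - \<i> * complex_of_real h * z2 - complex_of_real a2 * z"
  shows "(cmod P1)\<^sup>2 + (cmod P2)\<^sup>2 = (cmod (P1 + \<i> * P2))\<^sup>2
     + 2 * h\<^sup>2 * (Re z1 * Im z2 - Re z2 * Im z1)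
     - h * (a2 * (2 * (Re z * Re z1 + Im z * Im z1)))
     + h * (a1 * (2 * (Re z * Re z2 + Im z * Im z2)))"
  unfolding P1_def P2_def cmod_power2 by (simp add: power2_eq_square algebra_simps)

lemma cmod_sq_Pi1:
  "(cmod (Pi1 h a u x))\<^sup>2 = (h * Im (pd1 u x) - a x * Re (u x))\<^sup>2 + (h * Re (pd1 u x) + a x * Im (u x))\<^sup>2"
  unfolding Pi1_def cmod_power2 by (simp add: power2_eq_square algebra_simps)

lemma pauli_id:
  fixes u :: "real \<times> real \<Rightarrow> complex" and a1 a2 :: "real \<times> real \<Rightarrow> real"
  assumes V: "open V" and K: "compact K" "K \<subseteq> V" and uz: "\<And>x. x \<notin> K \<Longrightarrow> u x = 0"
    and u: "C1 UNIV u" and a1: "C1 V a1" and a2: "C1 V a2"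
  shows "integral UNIV (\<lambda>x. (cmod (Pi1 h a1 u x))\<^sup>2 + (cmod (Pi2 h a2 u x))\<^sup>2)
     = integral UNIV (\<lambda>x. (cmod (Pi1 h a1 u x + \<i> * Pi2 h a2 u x))\<^sup>2)
       + h * integral UNIV (\<lambda>x. (pd1 a2 x - pd2 a1 x) * (cmod (u x))\<^sup>2)"
proof -
  define R where "R = (\<lambda>x. Re (u x))"
  define I where "I = (\<lambda>x. Im (u x))"
  define \<rho> where "\<rho> = (\<lambda>x. R x * R x + I x * I x)"
  have du: "\<And>x. u differentiable (at x)" and cu: "continuous_on UNIV u"
    and cu1: "continuous_on UNIV (pd1 u)" and cu2: "continuous_on UNIV (pd2 u)" using u unfolding C1_def by blast+
  have CR: "C1 UNIV R" and CI: "C1 UNIV I" unfolding R_def I_def using C1_Re[OF open_UNIV u] by auto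
  have Rz: "R x = 0" and Iz: "I x = 0" if "x \<notin> K" for x using uz that unfolding R_def I_def by auto
  have u1z: "pd1 u x = 0" and u2z: "pd2 u x = 0" if "x \<notin> K" for x using pd_zero_out[of K u x] K uz that by auto
  have dR: "\<And>x. R differentiable (at x)" and dI: "\<And>x. I differentiable (at x)"
    using CR CI unfolding C1_def by blast+
  have R1: "pd1 R x = Re (pd1 u x)" "pd2 R x = Re (pd2 u x)" "pd1 I x = Im (pd1 u x)" "pd2 I x = Im (pd2 u x)" for x
    unfolding R_def I_def using re_pd[OF du] by auto
  have \<rho>z: "\<rho> x = 0" if "x \<notin> K" for x unfolding \<rho>_def using Rz Iz that by simp
  have \<rho>1: "pd1 \<rho> x = 2 * (R x * pd1 R x + I x * pd1 I x)" "pd2 \<rho> x = 2 * (R x * pd2 R x + I x * pd2 I x)" for x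
    unfolding \<rho>_def using sq_pd[OF dR dI] by auto
  have C\<rho>: "C1 UNIV \<rho>" unfolding C1_def
  proof (intro conjI ballI)
    show "\<rho> differentiable (at x)" for x unfolding \<rho>_def using sq_pd(1)[OF dR dI] by auto
    show "continuous_on UNIV \<rho>" unfolding \<rho>_def R_def I_def by (intro continuous_intros cu)
    show "continuous_on UNIV (pd1 \<rho>)" unfolding \<rho>1[abs_def] R1 unfolding R_def I_def by (intro continuous_intros cu cu1)
    show "continuous_on UNIV (pd2 \<rho>)" unfolding \<rho>1[abs_def] R1 unfolding R_def I_def by (intro continuous_intros cu cu2)
  qed
  have ca1: "continuous_on V a1" "continuous_on V (pd1 a1)" "continuous_on V (pd2 a1)" using a1 unfolding C1_def by blast+
  have ca2: "continuous_on V a2" "continuous_on V (pd1 a2)" "continuous_on V (pd2 a2)" using a2 unfolding C1_def by blast+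
  have cuV: "continuous_on V u" "continuous_on V (pd1 u)" "continuous_on V (pd2 u)"
    using cu cu1 cu2 by (auto intro: continuous_on_subset)
  note ii = int_glue[OF V K]
  have i0: "(\<lambda>x. (cmod (Pi1 h a1 u x + \<i> * Pi2 h a2 u x))\<^sup>2) integrable_on UNIV"
    by (rule ii) (auto simp: Pi1_def Pi2_def uz u1z u2z intro!: continuous_intros ca1 ca2 cuV)
  have iT1: "(\<lambda>x. pd1 R x * pd2 I x) integrable_on UNIV"
    by (rule ii) (auto simp: R1 u1z u2z intro!: continuous_intros cuV)
  have iT2: "(\<lambda>x. pd2 R x * pd1 I x) integrable_on UNIV"
    by (rule ii) (auto simp: R1 u1z u2z intro!: continuous_intros cuV)
  have ibp1: "integral UNIV (\<lambda>x. a2 x * pd1 \<rho> x) = - integral UNIV (\<lambda>x. \<rho> x * pd1 a2 x)"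
    and iS1: "(\<lambda>x. a2 x * pd1 \<rho> x) integrable_on UNIV" and iS1': "(\<lambda>x. \<rho> x * pd1 a2 x) integrable_on UNIV"
    using ibp(1,3,4)[OF V K \<rho>z C\<rho> a2] by auto
  have ibp2: "integral UNIV (\<lambda>x. a1 x * pd2 \<rho> x) = - integral UNIV (\<lambda>x. \<rho> x * pd2 a1 x)"
    and iS2: "(\<lambda>x. a1 x * pd2 \<rho> x) integrable_on UNIV" and iS2': "(\<lambda>x. \<rho> x * pd2 a1 x) integrable_on UNIV"
    using ibp(2,5,6)[OF V K \<rho>z C\<rho> a1] by auto
  have jac0: "integral UNIV (\<lambda>x. pd1 R x * pd2 I x) = integral UNIV (\<lambda>x. pd2 R x * pd1 I x)"
    by (rule jac[OF CR CI K(1) Rz Iz])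
  have pw: "(cmod (Pi1 h a1 u x))\<^sup>2 + (cmod (Pi2 h a2 u x))\<^sup>2 =
      (cmod (Pi1 h a1 u x + \<i> * Pi2 h a2 u x))\<^sup>2
      + (2 * h\<^sup>2) * (pd1 R x * pd2 I x) - (2 * h\<^sup>2) * (pd2 R x * pd1 I x)
      - h * (a2 x * pd1 \<rho> x) + h * (a1 x * pd2 \<rho> x)" for x
    unfolding Pi1_def Pi2_def \<rho>1 R1 using pw_identity[of h "pd1 u x" "a1 x" "u x" "pd2 u x" "a2 x"]
    unfolding R_def I_def by (simp add: algebra_simps)
  have "integral UNIV (\<lambda>x. (cmod (Pi1 h a1 u x))\<^sup>2 + (cmod (Pi2 h a2 u x))\<^sup>2)
     = integral UNIV (\<lambda>x. (cmod (Pi1 h a1 u x + \<i> * Pi2 h a2 u x))\<^sup>2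
      + (2 * h\<^sup>2) * (pd1 R x * pd2 I x) - (2 * h\<^sup>2) * (pd2 R x * pd1 I x)
      - h * (a2 x * pd1 \<rho> x) + h * (a1 x * pd2 \<rho> x))"
    using pw by simp
  also have "\<dots> = integral UNIV (\<lambda>x. (cmod (Pi1 h a1 u x + \<i> * Pi2 h a2 u x))\<^sup>2)
      + (2 * h\<^sup>2) * integral UNIV (\<lambda>x. pd1 R x * pd2 I x) - (2 * h\<^sup>2) * integral UNIV (\<lambda>x. pd2 R x * pd1 I x)
      - h * integral UNIV (\<lambda>x. a2 x * pd1 \<rho> x) + h * integral UNIV (\<lambda>x. a1 x * pd2 \<rho> x)"
    by (simp add: integral_add integral_diff integrable_add integrable_diff integrable_on_mult_right
        i0 iT1 iT2 iS1 iS2)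
  also have "\<dots> = integral UNIV (\<lambda>x. (cmod (Pi1 h a1 u x + \<i> * Pi2 h a2 u x))\<^sup>2)
      + h * (integral UNIV (\<lambda>x. \<rho> x * pd1 a2 x) - integral UNIV (\<lambda>x. \<rho> x * pd2 a1 x))"
    using jac0 ibp1 ibp2 by (simp add: algebra_simps)
  also have "integral UNIV (\<lambda>x. \<rho> x * pd1 a2 x) - integral UNIV (\<lambda>x. \<rho> x * pd2 a1 x)
      = integral UNIV (\<lambda>x. (pd1 a2 x - pd2 a1 x) * (cmod (u x))\<^sup>2)"
  proof -
    have "(cmod (u x))\<^sup>2 = \<rho> x" for x unfolding \<rho>_def R_def I_def cmod_power2 by (simp add: power2_eq_square)
    then show ?thesis using integral_diff[OF iS1' iS2'] by (simp add: algebra_simps)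
  qed
  finally show ?thesis .
qed

lemma C1_fst: "C1 V (fst :: real \<times> real \<Rightarrow> real)" "pd1 (fst :: real \<times> real \<Rightarrow> real) x = 1"
proof -
  have D: "((fst :: real \<times> real \<Rightarrow> real) has_derivative fst) (at x)" for x by (rule has_derivative_fst[OF has_derivative_ident])
  have p1: "pd1 (fst :: real \<times> real \<Rightarrow> real) x = 1" for x using pd1_eq[OF D] by simp
  have p2: "pd2 (fst :: real \<times> real \<Rightarrow> real) x = 0" for x using pd2_eq[OF D] by simp
  show "pd1 (fst :: real \<times> real \<Rightarrow> real) x = 1" by (rule p1)
  have e1: "pd1 (fst :: real \<times> real \<Rightarrow> real) = (\<lambda>x. 1)" using p1 by auto
  have e2: "pd2 (fst :: real \<times> real \<Rightarrow> real) = (\<lambda>x. 0)" using p2 by auto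
  have "(fst :: real \<times> real \<Rightarrow> real) differentiable (at x)" for x using D[of x] by (rule differentiableI)
  then show "C1 V (fst :: real \<times> real \<Rightarrow> real)" unfolding C1_def e1 e2
    by (auto intro!: continuous_intros)
qed

lemma pw_poinc2:
  fixes s L h R I X Y :: real
  assumes s: "\<bar>s\<bar> \<le> L" and h: "h > 0"
  shows "- (s * (2 * (I * X + R * Y) / h)) \<le> (R * R + I * I) / 2 + (2 * L\<^sup>2 / h\<^sup>2) * (X\<^sup>2 + Y\<^sup>2)"
proof -
  define q where "q = 2 * L / h"
  have L0: "L \<ge> 0" using s by linarith
  have q0: "q \<ge> 0" unfolding q_def using L0 h by simp
  have "- (s * (2 * (I * X + R * Y) / h)) \<le> \<bar>s\<bar> * (2 * \<bar>I * X + R * Y\<bar> / h)"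
    by (metis abs_ge_minus_self abs_mult abs_divide abs_numeral abs_of_pos h mult.assoc abs_mult)
  also have "\<dots> \<le> L * (2 * (\<bar>I\<bar> * \<bar>X\<bar> + \<bar>R\<bar> * \<bar>Y\<bar>) / h)"
    using s h by (intro mult_mono divide_right_mono mult_left_mono) (auto simp: abs_mult[symmetric] abs_triangle_ineq)
  also have "\<dots> = (q * \<bar>I\<bar>) * \<bar>X\<bar> + (q * \<bar>R\<bar>) * \<bar>Y\<bar>" unfolding q_def using h by (simp add: field_simps)
  also have "\<dots> \<le> (I * I + q\<^sup>2 * X\<^sup>2) / 2 + (R * R + q\<^sup>2 * Y\<^sup>2) / 2"
  proof -
    have a: "(q * \<bar>I\<bar>) * \<bar>X\<bar> \<le> (I * I + q\<^sup>2 * X\<^sup>2) / 2"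
      using sum_squares_ge_zero[of "\<bar>I\<bar> - q * \<bar>X\<bar>" 0] by (simp add: power2_eq_square algebra_simps)
    have b: "(q * \<bar>R\<bar>) * \<bar>Y\<bar> \<le> (R * R + q\<^sup>2 * Y\<^sup>2) / 2"
      using sum_squares_ge_zero[of "\<bar>R\<bar> - q * \<bar>Y\<bar>" 0] by (simp add: power2_eq_square algebra_simps)
    show ?thesis using a b by linarith
  qed
  also have "\<dots> = (R * R + I * I) / 2 + (2 * L\<^sup>2 / h\<^sup>2) * (X\<^sup>2 + Y\<^sup>2)"
    unfolding q_def using h by (simp add: field_simps power2_eq_square)
  finally show ?thesis .
qed

lemma poinc:
  fixes w :: "real \<times> real \<Rightarrow> complex" and a :: "real \<times> real \<Rightarrow> real"
  assumes V: "open V" and K: "compact K" "K \<subseteq> V" and wz: "\<And>x. x \<notin> K \<Longrightarrow> w x = 0"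
    and w: "C1 UNIV w" and ca: "continuous_on V a" and L: "\<And>x. x \<in> V \<Longrightarrow> \<bar>fst x\<bar> \<le> L" and h: "h > 0"
  shows "integral UNIV (\<lambda>x. (cmod (w x))\<^sup>2) \<le> (4 * L\<^sup>2 / h\<^sup>2) * integral UNIV (\<lambda>x. (cmod (Pi1 h a w x))\<^sup>2)"
proof -
  define R where "R = (\<lambda>x. Re (w x))"
  define I where "I = (\<lambda>x. Im (w x))"
  define \<rho> where "\<rho> = (\<lambda>x. R x * R x + I x * I x)"
  have dw: "\<And>x. w differentiable (at x)" and cw: "continuous_on UNIV w"
    and cw1: "continuous_on UNIV (pd1 w)" and cw2: "continuous_on UNIV (pd2 w)" using w unfolding C1_def by blast+
  have CR: "C1 UNIV R" and CI: "C1 UNIV I" unfolding R_def I_def using C1_Re[OF open_UNIV w] by auto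
  have Rz: "R x = 0" and Iz: "I x = 0" if "x \<notin> K" for x using wz that unfolding R_def I_def by auto
  have w1z: "pd1 w x = 0" if "x \<notin> K" for x using pd_zero_out[of K w x] K wz that by auto
  have dR: "\<And>x. R differentiable (at x)" and dI: "\<And>x. I differentiable (at x)"
    using CR CI unfolding C1_def by blast+
  have R1: "pd1 R x = Re (pd1 w x)" "pd1 I x = Im (pd1 w x)" for x
    unfolding R_def I_def using re_pd[OF dw] by auto
  have \<rho>z: "\<rho> x = 0" if "x \<notin> K" for x unfolding \<rho>_def using Rz Iz that by simp
  have \<rho>1: "pd1 \<rho> x = 2 * (R x * pd1 R x + I x * pd1 I x)" "pd2 \<rho> x = 2 * (R x * pd2 R x + I x * pd2 I x)" for x
    unfolding \<rho>_def using sq_pd[OF dR dI] by auto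
  have R2: "pd2 R x = Re (pd2 w x)" "pd2 I x = Im (pd2 w x)" for x
    unfolding R_def I_def using re_pd[OF dw] by auto
  have C\<rho>: "C1 UNIV \<rho>" unfolding C1_def
  proof (intro conjI ballI)
    show "\<rho> differentiable (at x)" for x unfolding \<rho>_def using sq_pd(1)[OF dR dI] by auto
    show "continuous_on UNIV \<rho>" unfolding \<rho>_def R_def I_def by (intro continuous_intros cw)
    show "continuous_on UNIV (pd1 \<rho>)" unfolding \<rho>1[abs_def] R1 unfolding R_def I_def by (intro continuous_intros cw cw1)
    show "continuous_on UNIV (pd2 \<rho>)" unfolding \<rho>1[abs_def] R2 unfolding R_def I_def by (intro continuous_intros cw cw2)
  qed
  have ib: "integral UNIV (\<lambda>x. fst x * pd1 \<rho> x) = - integral UNIV (\<lambda>x. \<rho> x * pd1 fst x)"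
    and i1: "(\<lambda>x. fst x * pd1 \<rho> x) integrable_on UNIV"
    using ibp(1,3)[OF V K \<rho>z C\<rho> C1_fst(1)] by auto
  have ib': "integral UNIV \<rho> = - integral UNIV (\<lambda>x. fst x * pd1 \<rho> x)" using ib C1_fst(2) by simp
  have cwV: "continuous_on V w" "continuous_on V (pd1 w)" using cw cw1 by (auto intro: continuous_on_subset)
  have i2: "\<rho> integrable_on UNIV"
    by (rule int_glue[OF V K]) (auto intro!: continuous_intros cwV simp: \<rho>_def R_def I_def wz)
  have i3: "(\<lambda>x. (cmod (Pi1 h a w x))\<^sup>2) integrable_on UNIV"
    by (rule int_glue[OF V K]) (auto simp: Pi1_def wz w1z intro!: continuous_intros ca cwV)
  define c where "c = 2 * L\<^sup>2 / h\<^sup>2"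
  have pw: "- (fst x * pd1 \<rho> x) \<le> \<rho> x / 2 + c * (cmod (Pi1 h a w x))\<^sup>2" for x
  proof (cases "x \<in> K")
    case False
    then have "pd1 \<rho> x = 0" "\<rho> x = 0" using pd_zero_out(1)[of K \<rho> x] K \<rho>z by auto
    then show ?thesis unfolding c_def by simp
  next
    case True
    then have "\<bar>fst x\<bar> \<le> L" using L K(2) by blast
    from pw_poinc2[OF this h, of "I x" "h * Im (pd1 w x) - a x * Re (w x)" "R x" "h * Re (pd1 w x) + a x * Im (w x)"]
    have P: "- (fst x * (2 * (I x * (h * Im (pd1 w x) - a x * Re (w x)) + R x * (h * Re (pd1 w x) + a x * Im (w x))) / h))
      \<le> (R x * R x + I x * I x) / 2 + c * ((h * Im (pd1 w x) - a x * Re (w x))\<^sup>2 + (h * Re (pd1 w x) + a x * Im (w x))\<^sup>2)"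
      unfolding c_def .
    have E: "2 * (I x * (h * Im (pd1 w x) - a x * Re (w x)) + R x * (h * Re (pd1 w x) + a x * Im (w x))) / h
        = pd1 \<rho> x" unfolding \<rho>1 R1 using h unfolding R_def I_def by (simp add: field_simps)
    have A: "- (fst x * pd1 \<rho> x) \<le> (R x * R x + I x * I x) / 2 + c * ((h * Im (pd1 w x) - a x * Re (w x))\<^sup>2 + (h * Re (pd1 w x) + a x * Im (w x))\<^sup>2)"
      using P unfolding E .
    show ?thesis unfolding cmod_sq_Pi1 using A by (simp add: \<rho>_def)
  qed
  have "integral UNIV \<rho> \<le> integral UNIV (\<lambda>x. \<rho> x / 2 + c * (cmod (Pi1 h a w x))\<^sup>2)"
    unfolding ib' integral_neg[of UNIV "\<lambda>x. fst x * pd1 \<rho> x", symmetric]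
    by (rule integral_le) (auto intro!: integrable_neg i1 integrable_add integrable_on_mult_right i3 integrable_on_divide i2 pw)
  also have "\<dots> = integral UNIV \<rho> / 2 + c * integral UNIV (\<lambda>x. (cmod (Pi1 h a w x))\<^sup>2)"
    by (simp add: integral_add integrable_on_mult_right i3 integrable_on_divide i2)
  finally have "integral UNIV \<rho> \<le> 2 * c * integral UNIV (\<lambda>x. (cmod (Pi1 h a w x))\<^sup>2)" by simp
  moreover have "(\<lambda>x. (cmod (w x))\<^sup>2) = \<rho>" unfolding \<rho>_def R_def I_def cmod_power2 by (simp add: power2_eq_square)
  ultimately show ?thesis unfolding c_def by simp
qed

lemma line_has_deriv:
  fixes f :: "real \<times> real \<Rightarrow> real"
  assumes "f differentiable (at (x0 + t *\<^sub>R e))"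
  shows "((\<lambda>s. f (x0 + s *\<^sub>R e)) has_real_derivative frechet_derivative f (at (x0 + t *\<^sub>R e)) e) (at t)"
proof -
  have d: "(f has_derivative frechet_derivative f (at (x0 + t *\<^sub>R e))) (at (x0 + t *\<^sub>R e))"
    using assms by (simp add: frechet_derivative_works)
  have lin: "linear (frechet_derivative f (at (x0 + t *\<^sub>R e)))" using d has_derivative_linear by blast
  have h1: "((\<lambda>s. x0 + s *\<^sub>R e) has_derivative (\<lambda>h. h *\<^sub>R e)) (at t)"
    by (auto intro!: derivative_eq_intros)
  have "((\<lambda>s. f (x0 + s *\<^sub>R e)) has_derivative (\<lambda>h. frechet_derivative f (at (x0 + t *\<^sub>R e)) (h *\<^sub>R e))) (at t)"
    using has_derivative_compose[OF h1 d] by simp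
  moreover have "(\<lambda>h. frechet_derivative f (at (x0 + t *\<^sub>R e)) (h *\<^sub>R e)) = (\<lambda>h. h * frechet_derivative f (at (x0 + t *\<^sub>R e)) e)"
    using lin by (simp add: linear_scale)
  ultimately show ?thesis unfolding has_real_derivative_iff_has_vector_derivative has_vector_derivative_def by simp
qed

lemma second_test:
  fixes \<psi> :: "real \<times> real \<Rightarrow> real" and e :: "real \<times> real"
  assumes O: "open \<Omega>" and x0: "x0 \<in> \<Omega>" and d: "\<And>y. y \<in> \<Omega> \<Longrightarrow> \<psi> differentiable (at y)"
    and dd: "(\<lambda>x. frechet_derivative \<psi> (at x) e) differentiable (at x0)"
    and mx: "\<And>y. y \<in> \<Omega> \<Longrightarrow> \<psi> y \<le> \<psi> x0"
  shows "frechet_derivative (\<lambda>x. frechet_derivative \<psi> (at x) e) (at x0) e \<le> 0"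
proof (rule ccontr)
  define D where "D = (\<lambda>x. frechet_derivative \<psi> (at x) e)"
  assume "\<not> frechet_derivative (\<lambda>x. frechet_derivative \<psi> (at x) e) (at x0) e \<le> 0"
  then have c: "frechet_derivative D (at x0) e > 0" unfolding D_def by simp
  have "frechet_derivative \<psi> (at x0) = (\<lambda>v. 0)"
    by (rule differential_zero_maxmin[OF x0 O]) (use d[OF x0] mx in \<open>auto simp: frechet_derivative_works\<close>)
  then have D0: "D x0 = 0" unfolding D_def by simp
  have "((\<lambda>s. D (x0 + s *\<^sub>R e)) has_real_derivative frechet_derivative D (at (x0 + 0 *\<^sub>R e)) e) (at 0)"
    by (rule line_has_deriv) (use dd in \<open>simp add: D_def\<close>)
  then have "DERIV (\<lambda>s. D (x0 + s *\<^sub>R e)) 0 :> frechet_derivative D (at x0) e" by simp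
  from DERIV_pos_inc_right[OF this c] obtain dl where dl: "dl > 0" "\<And>h. h > 0 \<Longrightarrow> h < dl \<Longrightarrow> D x0 < D (x0 + h *\<^sub>R e)"
    by auto
  obtain r where r: "r > 0" "ball x0 r \<subseteq> \<Omega>" using O x0 openE by blast
  define s where "s = min dl (r / (norm e + 1)) / 2"
  have ne1: "norm e + 1 > 0" by (simp add: add_nonneg_pos)
  have s0: "s > 0" unfolding s_def using dl r ne1 by simp
  have sd: "s < dl" unfolding s_def using dl r by (auto simp: min_def)
  have inb: "x0 + t *\<^sub>R e \<in> \<Omega>" if "0 \<le> t" "t \<le> s" for t
  proof -
    have "min dl (r / (norm e + 1)) \<le> r / (norm e + 1)" by simp
    then have "t < r / (norm e + 1)" using that s0 unfolding s_def by linarith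
    then have "t * (norm e + 1) < r" by (simp add: field_simps add_pos_nonneg)
    then have "norm (t *\<^sub>R e) < r" using that by (simp add: algebra_simps)
    then show ?thesis using r by (auto simp: dist_norm)
  qed
  have "\<exists>z\<in>{0<..<s}. \<psi> (x0 + s *\<^sub>R e) - \<psi> (x0 + 0 *\<^sub>R e) = (\<lambda>h. h * D (x0 + z *\<^sub>R e)) (s - 0)"
  proof (rule mvt_simple[OF s0])
    fix t assume t: "0 \<le> t" "t \<le> s"
    have "((\<lambda>s. \<psi> (x0 + s *\<^sub>R e)) has_real_derivative D (x0 + t *\<^sub>R e)) (at t)"
      unfolding D_def by (rule line_has_deriv) (rule d[OF inb[OF t]])
    then show "((\<lambda>s. \<psi> (x0 + s *\<^sub>R e)) has_derivative (\<lambda>h. h * D (x0 + t *\<^sub>R e))) (at t within {0..s})"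
      unfolding has_real_derivative_iff_has_vector_derivative has_vector_derivative_def by (simp add: has_derivative_at_withinI)
  qed
  then obtain z where z: "0 < z" "z < s" "\<psi> (x0 + s *\<^sub>R e) - \<psi> x0 = s * D (x0 + z *\<^sub>R e)" by auto
  have "D (x0 + z *\<^sub>R e) > 0" using dl(2)[of z] z sd D0 by simp
  then have "s * D (x0 + z *\<^sub>R e) > 0" using s0 by simp
  then have "\<psi> (x0 + s *\<^sub>R e) > \<psi> x0" using z(3) by linarith
  moreover have "\<psi> (x0 + s *\<^sub>R e) \<le> \<psi> x0" using mx inb s0 by simp
  ultimately show False by simp
qed

lemma Ck2_facts:
  assumes "Ck_on 2 \<Omega> \<psi>"
  shows "\<forall>x\<in>\<Omega>. \<psi> differentiable (at x)" "\<forall>x\<in>\<Omega>. pd1 \<psi> differentiable (at x)"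
    "\<forall>x\<in>\<Omega>. pd2 \<psi> differentiable (at x)" "continuous_on \<Omega> (pd1 (pd1 \<psi>))"
    "continuous_on \<Omega> (pd2 (pd2 \<psi>))" "continuous_on \<Omega> (pd1 \<psi>)" "continuous_on \<Omega> (pd2 \<psi>)"
    "continuous_on \<Omega> \<psi>" "continuous_on \<Omega> (pd2 (pd1 \<psi>))" "continuous_on \<Omega> (pd1 (pd2 \<psi>))"
  using assms by (simp_all add: numeral_2_eq_2)

lemma max_principle:
  fixes \<psi> B :: "real \<times> real \<Rightarrow> real"
  assumes O: "open \<Omega>" "bounded \<Omega>" and c: "continuous_on (closure \<Omega>) \<psi>"
    and C2: "Ck_on 2 \<Omega> \<psi>" and lap: "\<And>x. x \<in> \<Omega> \<Longrightarrow> pd1 (pd1 \<psi>) x + pd2 (pd2 \<psi>) x > 0"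
    and bd: "\<And>x. x \<in> frontier \<Omega> \<Longrightarrow> \<psi> x = 0"
    and x: "x \<in> \<Omega>"
  shows "\<psi> x \<le> 0"
proof -
  have cpt: "compact (closure \<Omega>)" using O(2) compact_closure by blast
  have ne: "closure \<Omega> \<noteq> {}" using x closure_subset by blast
  obtain x0 where x0: "x0 \<in> closure \<Omega>" "\<And>y. y \<in> closure \<Omega> \<Longrightarrow> \<psi> y \<le> \<psi> x0"
    using continuous_attains_sup[OF cpt ne c] by blast
  show ?thesis
  proof (cases "x0 \<in> frontier \<Omega>")
    case True
    have "\<psi> x0 = 0" using bd[OF True] .
    moreover have "x \<in> closure \<Omega>" using x closure_subset by blast
    ultimately show ?thesis using x0(2)[of x] by simp
  next
    case False
    then have "x0 \<in> interior \<Omega>" using x0(1) unfolding frontier_def by blast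
    then have x0O: "x0 \<in> \<Omega>" using interior_open[OF O(1)] by simp
    have d: "\<And>y. y \<in> \<Omega> \<Longrightarrow> \<psi> differentiable (at y)" using Ck2_facts(1)[OF C2] by blast
    have d1: "pd1 \<psi> differentiable (at x0)" "pd2 \<psi> differentiable (at x0)"
      using Ck2_facts(2,3)[OF C2] x0O by blast+
    have mx: "\<And>y. y \<in> \<Omega> \<Longrightarrow> \<psi> y \<le> \<psi> x0" using x0(2) closure_subset by blast
    have e1: "pd1 \<psi> = (\<lambda>x. frechet_derivative \<psi> (at x) (1,0))" unfolding pd1_def by (rule refl)
    have e2: "pd2 \<psi> = (\<lambda>x. frechet_derivative \<psi> (at x) (0,1))" unfolding pd2_def by (rule refl)
    have dd1: "(\<lambda>x. frechet_derivative \<psi> (at x) (1,0)) differentiable (at x0)" using d1(1) unfolding pd1_def .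
    have dd2: "(\<lambda>x. frechet_derivative \<psi> (at x) (0,1)) differentiable (at x0)" using d1(2) unfolding pd2_def .
    have "frechet_derivative (\<lambda>x. frechet_derivative \<psi> (at x) (1,0)) (at x0) (1,0) \<le> 0"
      by (rule second_test[OF O(1) x0O d dd1 mx])
    then have "pd1 (pd1 \<psi>) x0 \<le> 0" unfolding e1 pd1_def .
    moreover have "frechet_derivative (\<lambda>x. frechet_derivative \<psi> (at x) (0,1)) (at x0) (0,1) \<le> 0"
      by (rule second_test[OF O(1) x0O d dd2 mx])
    then have "pd2 (pd2 \<psi>) x0 \<le> 0" unfolding e2 pd2_def .
    ultimately show ?thesis using lap[OF x0O] by simp
  qed
qed

lemma phi_deriv: "((\<lambda>s::real. (max 0 s)\<^sup>2) has_real_derivative 2 * max 0 s) (at s)"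
proof (cases "s > 0")
  case True
  have "((\<lambda>s::real. s\<^sup>2) has_real_derivative 2 * s) (at s)" by (auto intro!: derivative_eq_intros)
  then have "((\<lambda>s::real. (max 0 s)\<^sup>2) has_real_derivative 2 * s) (at s)"
    by (rule has_field_derivative_transform_within_open[of _ _ _ "{0<..}"]) (use True in auto)
  then show ?thesis using True by simp
next
  case False
  show ?thesis
  proof (cases "s < 0")
    case True
    have "((\<lambda>s::real. 0) has_real_derivative 0) (at s)" by simp
    then have "((\<lambda>s::real. (max 0 s)\<^sup>2) has_real_derivative 0) (at s)"
      by (rule has_field_derivative_transform_within_open[of _ _ _ "{..<0}"]) (use True in auto)
    then show ?thesis using True by simp
  next
    case False
    then have s0: "s = 0" using \<open>\<not> s > 0\<close> by simp
    have "((\<lambda>h::real. ((max 0 (0 + h))\<^sup>2 - (max 0 0)\<^sup>2) / h) \<longlongrightarrow> 0) (at 0)"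
    proof (rule Lim_null_comparison)
      show "\<forall>\<^sub>F h in at 0. norm (((max 0 (0 + h))\<^sup>2 - (max 0 0)\<^sup>2) / h) \<le> \<bar>h\<bar>"
        by (rule always_eventually) (auto simp: power2_eq_square abs_mult max_def)
      show "((\<lambda>h::real. \<bar>h\<bar>) \<longlongrightarrow> 0) (at 0)" by (auto intro!: tendsto_eq_intros)
    qed
    then show ?thesis unfolding s0 DERIV_def by simp
  qed
qed

lemma bump_exists:
  assumes O: "open \<Omega>" "\<Omega> \<noteq> {}"
  shows "\<exists>u. test_fun \<Omega> u \<and> (\<exists>x. u x \<noteq> 0)"
proof -
  obtain x0 where x0: "x0 \<in> \<Omega>" using O(2) by blast
  obtain e where e: "e > 0" "ball x0 e \<subseteq> \<Omega>" using O(1) x0 openE by blast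
  define r where "r = e / 2"
  obtain a b where ab: "x0 = (a,b)" by (cases x0)
  define q where "q = (\<lambda>x::real\<times>real. r\<^sup>2 - ((fst x - a)\<^sup>2 + (snd x - b)\<^sup>2))"
  define \<beta> where "\<beta> = (\<lambda>x. (max 0 (q x))\<^sup>2)"
  define u where "u = (\<lambda>x. complex_of_real (\<beta> x))"
  have Dq: "(q has_derivative (\<lambda>v. - (2 * (fst x - a) * fst v + 2 * (snd x - b) * snd v))) (at x)" for x
    unfolding q_def by (auto intro!: derivative_eq_intros simp: algebra_simps)
  have D\<beta>: "(\<beta> has_derivative (\<lambda>v. (- (2 * (fst x - a) * fst v + 2 * (snd x - b) * snd v)) * (2 * max 0 (q x)))) (at x)" for x
  proof -
    have "((\<lambda>s::real. (max 0 s)\<^sup>2) has_derivative (\<lambda>h. h * (2 * max 0 (q x)))) (at (q x))"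
      using phi_deriv[of "q x"] unfolding has_real_derivative_iff_has_vector_derivative has_vector_derivative_def by simp
    from has_derivative_compose[OF Dq this] show ?thesis unfolding \<beta>_def by simp
  qed
  have Du: "(u has_derivative (\<lambda>v. complex_of_real ((- (2 * (fst x - a) * fst v + 2 * (snd x - b) * snd v)) * (2 * max 0 (q x))))) (at x)" for x
    unfolding u_def by (rule has_derivative_of_real[OF D\<beta>])
  have p1: "pd1 u = (\<lambda>x. complex_of_real ((- (2 * (fst x - a))) * (2 * max 0 (q x))))"
    using pd1_eq[OF Du] by (auto simp: fun_eq_iff)
  have p2: "pd2 u = (\<lambda>x. complex_of_real ((- (2 * (snd x - b))) * (2 * max 0 (q x))))"
    using pd2_eq[OF Du] by (auto simp: fun_eq_iff)
  have du: "u differentiable (at x)" for x using Du[of x] by (rule differentiableI)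
  have C: "Ck_on 1 UNIV u"
    unfolding Ck1_C1 C1_def p1 p2
  proof (intro conjI ballI)
    show "u differentiable (at x)" for x by (rule du)
    show "continuous_on UNIV u" unfolding u_def \<beta>_def q_def by (intro continuous_intros)
    show "continuous_on UNIV (\<lambda>x. complex_of_real (- (2 * (fst x - a)) * (2 * max 0 (q x))))"
      unfolding q_def by (intro continuous_intros)
    show "continuous_on UNIV (\<lambda>x. complex_of_real (- (2 * (snd x - b)) * (2 * max 0 (q x))))"
      unfolding q_def by (intro continuous_intros)
  qed
  have r0: "r > 0" unfolding r_def using e by simp
  have dsq: "(dist x x0)\<^sup>2 = (fst x - a)\<^sup>2 + (snd x - b)\<^sup>2" for x
  proof -
    obtain x1 x2 where x: "x = (x1,x2)" by (cases x)
    have "(dist x x0)\<^sup>2 = (dist x1 a)\<^sup>2 + (dist x2 b)\<^sup>2" unfolding x ab dist_Pair_Pair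
      by (simp add: add_nonneg_nonneg)
    then show ?thesis unfolding x dist_real_def by simp
  qed
  have sub: "{x. u x \<noteq> 0} \<subseteq> ball x0 r"
  proof
    fix x assume "x \<in> {x. u x \<noteq> 0}"
    then have "q x \<noteq> 0 \<and> max 0 (q x) \<noteq> 0" unfolding u_def \<beta>_def by auto
    then have "q x > 0" by (simp add: max_def split: if_splits)
    then have "(dist x x0)\<^sup>2 < r\<^sup>2" unfolding q_def dsq by simp
    then have "dist x x0 < r" using r0 by (simp add: power_less_imp_less_base)
    then show "x \<in> ball x0 r" by (simp add: dist_commute)
  qed
  have cl: "closure {x. u x \<noteq> 0} \<subseteq> cball x0 r"
    using closure_mono[OF sub] closure_minimal[OF ball_subset_cball closed_cball] by blast
  have "cball x0 r \<subseteq> ball x0 e"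
  proof
    fix y assume "y \<in> cball x0 r"
    then have "dist x0 y \<le> r" by simp
    then show "y \<in> ball x0 e" using e unfolding r_def by simp
  qed
  then have clO: "closure {x. u x \<noteq> 0} \<subseteq> \<Omega>" using cl e(2) by blast
  have cpt: "compact (closure {x. u x \<noteq> 0})"
    using compact_closure bounded_subset[OF bounded_ball sub] by blast
  have "q x0 = r\<^sup>2" unfolding q_def ab by simp
  then have "\<beta> x0 = (r\<^sup>2)\<^sup>2" unfolding \<beta>_def by simp
  then have "u x0 \<noteq> 0" unfolding u_def using r0 by simp
  then show ?thesis using C clO cpt unfolding test_fun_def by blast
qed

lemma C1_sub: "C1 U f \<Longrightarrow> V \<subseteq> U \<Longrightarrow> C1 V f"
  unfolding C1_def by (auto intro: continuous_on_subset)

lemma addsub_pd: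
  fixes f g :: "real \<times> real \<Rightarrow> real"
  assumes "f differentiable (at x)" "g differentiable (at x)"
  shows "(\<lambda>x. f x + g x) differentiable (at x)" "pd1 (\<lambda>x. f x + g x) x = pd1 f x + pd1 g x"
    "pd2 (\<lambda>x. f x + g x) x = pd2 f x + pd2 g x"
    "(\<lambda>x. f x - g x) differentiable (at x)" "pd1 (\<lambda>x. f x - g x) x = pd1 f x - pd1 g x"
    "pd2 (\<lambda>x. f x - g x) x = pd2 f x - pd2 g x"
proof -
  have D: "((\<lambda>x. f x + g x) has_derivative (\<lambda>v. (fst v *\<^sub>R pd1 f x + snd v *\<^sub>R pd2 f x) + (fst v *\<^sub>R pd1 g x + snd v *\<^sub>R pd2 g x))) (at x)"
    by (rule has_derivative_add[OF has_derivative_pd[OF assms(1)] has_derivative_pd[OF assms(2)]])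
  have E: "((\<lambda>x. f x - g x) has_derivative (\<lambda>v. (fst v *\<^sub>R pd1 f x + snd v *\<^sub>R pd2 f x) - (fst v *\<^sub>R pd1 g x + snd v *\<^sub>R pd2 g x))) (at x)"
    by (rule has_derivative_diff[OF has_derivative_pd[OF assms(1)] has_derivative_pd[OF assms(2)]])
  show "(\<lambda>x. f x + g x) differentiable (at x)" using D by (rule differentiableI)
  show "(\<lambda>x. f x - g x) differentiable (at x)" using E by (rule differentiableI)
  show "pd1 (\<lambda>x. f x + g x) x = pd1 f x + pd1 g x" using pd1_eq[OF D] by simp
  show "pd2 (\<lambda>x. f x + g x) x = pd2 f x + pd2 g x" using pd2_eq[OF D] by simp
  show "pd1 (\<lambda>x. f x - g x) x = pd1 f x - pd1 g x" using pd1_eq[OF E] by simp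
  show "pd2 (\<lambda>x. f x - g x) x = pd2 f x - pd2 g x" using pd2_eq[OF E] by simp
qed

lemma C1_addsub:
  fixes f g :: "real \<times> real \<Rightarrow> real"
  assumes V: "open V" and f: "C1 V f" and g: "C1 V g"
  shows "C1 V (\<lambda>x. f x + g x)" "C1 V (\<lambda>x. f x - g x)"
proof -
  have d: "\<And>x. x \<in> V \<Longrightarrow> f differentiable (at x)" "\<And>x. x \<in> V \<Longrightarrow> g differentiable (at x)"
    using f g unfolding C1_def by blast+
  have c: "continuous_on V f" "continuous_on V (pd1 f)" "continuous_on V (pd2 f)"
    "continuous_on V g" "continuous_on V (pd1 g)" "continuous_on V (pd2 g)"
    using f g unfolding C1_def by blast+
  have "continuous_on V (pd1 (\<lambda>x. f x + g x))"
    by (rule continuous_on_cong[THEN iffD1, OF refl _ continuous_on_add[OF c(2) c(5)]]) (simp add: addsub_pd d)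
  moreover have "continuous_on V (pd2 (\<lambda>x. f x + g x))"
    by (rule continuous_on_cong[THEN iffD1, OF refl _ continuous_on_add[OF c(3) c(6)]]) (simp add: addsub_pd d)
  ultimately show "C1 V (\<lambda>x. f x + g x)" unfolding C1_def
    using addsub_pd(1)[OF d(1) d(2)] continuous_on_add[OF c(1) c(4)] by blast
  have "continuous_on V (pd1 (\<lambda>x. f x - g x))"
    by (rule continuous_on_cong[THEN iffD1, OF refl _ continuous_on_diff[OF c(2) c(5)]]) (simp add: addsub_pd d)
  moreover have "continuous_on V (pd2 (\<lambda>x. f x - g x))"
    by (rule continuous_on_cong[THEN iffD1, OF refl _ continuous_on_diff[OF c(3) c(6)]]) (simp add: addsub_pd d)
  ultimately show "C1 V (\<lambda>x. f x - g x)" unfolding C1_def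
    using addsub_pd(4)[OF d(1) d(2)] continuous_on_diff[OF c(1) c(4)] by blast
qed

lemma conj_w:
  fixes u :: "real \<times> real \<Rightarrow> complex" and \<psi> :: "real \<times> real \<Rightarrow> real" and h :: real
  assumes O: "open \<Omega>" and K: "compact K" "K \<subseteq> \<Omega>" and uz: "\<And>x. x \<notin> K \<Longrightarrow> u x = 0"
    and u: "C1 UNIV u" and \<psi>: "C1 \<Omega> \<psi>" and h: "h \<noteq> 0"
  defines "w \<equiv> \<lambda>x. complex_of_real (exp (\<psi> x / h)) * u x"
  shows "C1 UNIV w" "\<And>x. x \<notin> K \<Longrightarrow> w x = 0"
    "\<And>x. x \<in> \<Omega> \<Longrightarrow> pd1 w x = complex_of_real (exp (\<psi> x / h)) * (pd1 u x + complex_of_real (pd1 \<psi> x / h) * u x)"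
    "\<And>x. x \<in> \<Omega> \<Longrightarrow> pd2 w x = complex_of_real (exp (\<psi> x / h)) * (pd2 u x + complex_of_real (pd2 \<psi> x / h) * u x)"
proof -
  have du: "\<And>x. u differentiable (at x)" and cu: "continuous_on UNIV u"
    and cu1: "continuous_on UNIV (pd1 u)" and cu2: "continuous_on UNIV (pd2 u)" using u unfolding C1_def by blast+
  have d\<psi>: "\<And>x. x \<in> \<Omega> \<Longrightarrow> \<psi> differentiable (at x)" and c\<psi>: "continuous_on \<Omega> \<psi>"
    and c\<psi>1: "continuous_on \<Omega> (pd1 \<psi>)" and c\<psi>2: "continuous_on \<Omega> (pd2 \<psi>)" using \<psi> unfolding C1_def by blast+
  show wz: "\<And>x. x \<notin> K \<Longrightarrow> w x = 0" unfolding w_def using uz by simp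
  have D: "(w has_derivative (\<lambda>v. complex_of_real (exp (\<psi> x / h)) * (fst v *\<^sub>R pd1 u x + snd v *\<^sub>R pd2 u x)
      + complex_of_real (exp (\<psi> x / h) * ((fst v *\<^sub>R pd1 \<psi> x + snd v *\<^sub>R pd2 \<psi> x) / h)) * u x)) (at x)"
    if x: "x \<in> \<Omega>" for x
  proof -
    have E: "((\<lambda>x. exp (\<psi> x / h)) has_derivative (\<lambda>v. exp (\<psi> x / h) * ((fst v *\<^sub>R pd1 \<psi> x + snd v *\<^sub>R pd2 \<psi> x) / h))) (at x)"
      using has_derivative_pd[OF d\<psi>[OF x]] h by (auto intro!: derivative_eq_intros)
    show ?thesis unfolding w_def
      using has_derivative_mult[OF has_derivative_of_real[OF E] has_derivative_pd[OF du[of x]]] by (simp add: algebra_simps)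
  qed
  show p1: "pd1 w x = complex_of_real (exp (\<psi> x / h)) * (pd1 u x + complex_of_real (pd1 \<psi> x / h) * u x)"
    if "x \<in> \<Omega>" for x using pd1_eq[OF D[OF that]] by (simp add: algebra_simps)
  show p2: "pd2 w x = complex_of_real (exp (\<psi> x / h)) * (pd2 u x + complex_of_real (pd2 \<psi> x / h) * u x)"
    if "x \<in> \<Omega>" for x using pd2_eq[OF D[OF that]] by (simp add: algebra_simps)
  have u1z: "pd1 u x = 0" and u2z: "pd2 u x = 0" if "x \<notin> K" for x using pd_zero_out[of K u x] K uz that by auto
  have w1z: "pd1 w x = 0" and w2z: "pd2 w x = 0" if "x \<notin> K" for x using pd_zero_out[of K w x] K wz that by auto
  have dw: "w differentiable (at x)" for x
  proof (cases "x \<in> \<Omega>")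
    case True show ?thesis by (rule differentiableI[OF D[OF True]])
  next
    case False then show ?thesis using pd_zero_out(3)[of K w x] K wz by blast
  qed
  have cuO: "continuous_on \<Omega> u" "continuous_on \<Omega> (pd1 u)" "continuous_on \<Omega> (pd2 u)"
    using cu cu1 cu2 by (auto intro: continuous_on_subset)
  have cw: "continuous_on UNIV w"
    by (rule cont_glue[OF O K]) (auto simp: w_def uz h intro!: continuous_intros c\<psi> cuO)
  have cw1: "continuous_on UNIV (pd1 w)"
  proof (rule cont_glue[OF O K])
    have c: "continuous_on \<Omega> (\<lambda>x. complex_of_real (exp (\<psi> x / h)) * (pd1 u x + complex_of_real (pd1 \<psi> x / h) * u x))"
      by (intro continuous_intros c\<psi> c\<psi>1 cuO) (use h in auto)
    have "continuous_on \<Omega> (pd1 w) = continuous_on \<Omega> (\<lambda>x. complex_of_real (exp (\<psi> x / h)) * (pd1 u x + complex_of_real (pd1 \<psi> x / h) * u x))"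
      by (rule continuous_on_cong) (auto simp: p1)
    with c show "continuous_on \<Omega> (pd1 w)" by simp
  qed (rule w1z)
  have cw2: "continuous_on UNIV (pd2 w)"
  proof (rule cont_glue[OF O K])
    have c: "continuous_on \<Omega> (\<lambda>x. complex_of_real (exp (\<psi> x / h)) * (pd2 u x + complex_of_real (pd2 \<psi> x / h) * u x))"
      by (intro continuous_intros c\<psi> c\<psi>2 cuO) (use h in auto)
    have "continuous_on \<Omega> (pd2 w) = continuous_on \<Omega> (\<lambda>x. complex_of_real (exp (\<psi> x / h)) * (pd2 u x + complex_of_real (pd2 \<psi> x / h) * u x))"
      by (rule continuous_on_cong) (auto simp: p2)
    with c show "continuous_on \<Omega> (pd2 w)" by simp
  qed (rule w2z)
  show "C1 UNIV w" unfolding C1_def using dw cw cw1 cw2 by blast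
qed

lemma conj_alg0:
  fixes E h q1 q2 a1 a2 :: real and z z1 z2 :: complex
  shows "(- \<i> * complex_of_real h * (complex_of_real E * (z1 + complex_of_real q1 * z))
            - complex_of_real (a1 + h * q2) * (complex_of_real E * z))
       + \<i> * (- \<i> * complex_of_real h * (complex_of_real E * (z2 + complex_of_real q2 * z))
            - complex_of_real (a2 - h * q1) * (complex_of_real E * z))
     = complex_of_real E * ((- \<i> * complex_of_real h * z1 - complex_of_real a1 * z)
         + \<i> * (- \<i> * complex_of_real h * z2 - complex_of_real a2 * z))"
  by (simp add: algebra_simps)

lemma conj_alg:
  fixes E h p1 p2 a1 a2 :: real and z z1 z2 :: complex
  assumes h: "h \<noteq> 0"
  shows "(- \<i> * complex_of_real h * (complex_of_real E * (z1 + complex_of_real (p1 / h) * z))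
            - complex_of_real (a1 + p2) * (complex_of_real E * z))
       + \<i> * (- \<i> * complex_of_real h * (complex_of_real E * (z2 + complex_of_real (p2 / h) * z))
            - complex_of_real (a2 - p1) * (complex_of_real E * z))
     = complex_of_real E * ((- \<i> * complex_of_real h * z1 - complex_of_real a1 * z)
         + \<i> * (- \<i> * complex_of_real h * z2 - complex_of_real a2 * z))"
proof -
  define q1 where "q1 = p1 / h"
  define q2 where "q2 = p2 / h"
  have e: "p1 = h * q1" "p2 = h * q2" using h unfolding q1_def q2_def by simp_all
  show ?thesis unfolding q1_def[symmetric] q2_def[symmetric] unfolding e by (simp add: algebra_simps)
qed

lemma pos_integral:
  fixes f :: "real \<times> real \<Rightarrow> real"
  assumes c: "continuous_on UNIV f" and nn: "\<And>x. f x \<ge> 0" and K: "compact K" "\<And>x. x \<notin> K \<Longrightarrow> f x = 0"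
    and x0: "f x0 > 0"
  shows "integral UNIV f > 0"
proof -
  obtain a where a: "K \<subseteq> cbox (-a) a" using bounded_subset_cbox_symmetric compact_imp_bounded K(1) by blast
  obtain a1 a2 where a12: "a = (a1,a2)" by (cases a)
  define c where "c = (\<bar>a1\<bar> + \<bar>fst x0\<bar> + 1, \<bar>a2\<bar> + \<bar>snd x0\<bar> + 1)"
  have Kc: "K \<subseteq> cbox (-c) c"
  proof
    fix y assume "y \<in> K"
    then have "y \<in> cbox (-a) a" using a by blast
    then show "y \<in> cbox (-c) c" unfolding a12 c_def by (cases y) (auto simp: cbox_Pair_eq; arith)
  qed
  have x0c: "x0 \<in> cbox (-c) c" unfolding c_def by (cases x0) (auto simp: cbox_Pair_eq)
  have bne: "box (-c) c \<noteq> {}" unfolding c_def by (auto simp: box_ne_empty Basis_prod_def)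
  have "integral (cbox (-c) c) f = integral UNIV f"
    by (rule integral_UNIV_eq) (use K(2) Kc in blast)
  then have eq: "integral UNIV f = integral (cbox (-c) c) f" by simp
  have ge: "integral (cbox (-c) c) f \<ge> 0"
    by (rule integral_nonneg) (auto intro: integrable_continuous continuous_on_subset[OF c] nn)
  have "integral (cbox (-c) c) f \<noteq> 0"
  proof
    assume z: "integral (cbox (-c) c) f = 0"
    have "(f has_integral 0) (cbox (-c) c)"
      using integrable_continuous[OF continuous_on_subset[OF c subset_UNIV]] z by (metis has_integral_integral)
    then have "f x0 = 0"
      using has_integral_0_cbox_imp_0[OF continuous_on_subset[OF c subset_UNIV] _ _ bne x0c] nn by blast
    then show False using x0 by simp
  qed
  then show ?thesis using ge eq by simp
qed

lemma lower:
  fixes \<Omega> :: "(real \<times> real) set" and A1 A2 B \<psi> :: "real \<times> real \<Rightarrow> real" and u :: "real \<times> real \<Rightarrow> complex"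
  assumes O: "open \<Omega>" and h: "h > 0" and tf: "test_fun \<Omega> u" and nz: "u x0 \<noteq> 0"
    and \<psi>: "Ck_on 2 \<Omega> \<psi>" and \<psi>le: "\<And>x. x \<in> \<Omega> \<Longrightarrow> \<psi> x \<le> 0" and \<psi>ge: "\<And>x. x \<in> \<Omega> \<Longrightarrow> m \<le> \<psi> x"
    and lap: "\<And>x. x \<in> \<Omega> \<Longrightarrow> pd1 (pd1 \<psi>) x + pd2 (pd2 \<psi>) x = B x"
    and A1: "C1 \<Omega> A1" and A2: "C1 \<Omega> A2" and curl: "\<And>x. x \<in> \<Omega> \<Longrightarrow> pd1 A2 x - pd2 A1 x = B x"
    and L: "\<And>x. x \<in> \<Omega> \<Longrightarrow> \<bar>fst x\<bar> \<le> L" and L0: "L > 0"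
  shows "h\<^sup>2 * exp (2 * m / h) / (4 * L\<^sup>2) \<le> pauli_quotient h A1 A2 B \<Omega> u"
proof -
  define K where "K = closure {x. u x \<noteq> 0}"
  have K: "compact K" "K \<subseteq> \<Omega>" using tf unfolding test_fun_def K_def by auto
  have uz: "u x = 0" if "x \<notin> K" for x
  proof (rule ccontr)
    assume "u x \<noteq> 0"
    then have "x \<in> {x. u x \<noteq> 0}" by simp
    then have "x \<in> K" unfolding K_def by (rule closure_subset[THEN subsetD])
    then show False using that by simp
  qed
  have u: "C1 UNIV u" using tf unfolding test_fun_def Ck1_C1 by blast
  have du: "\<And>x. u differentiable (at x)" and cu: "continuous_on UNIV u"
    and cu1: "continuous_on UNIV (pd1 u)" and cu2: "continuous_on UNIV (pd2 u)" using u unfolding C1_def by blast+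
  have cuO: "continuous_on \<Omega> u" "continuous_on \<Omega> (pd1 u)" "continuous_on \<Omega> (pd2 u)"
    using cu cu1 cu2 by (auto intro: continuous_on_subset)
  have u1z: "pd1 u x = 0" and u2z: "pd2 u x = 0" if "x \<notin> K" for x using pd_zero_out[of K u x] K uz that by auto
  have outO: "x \<notin> K" if "x \<notin> \<Omega>" for x using that K by auto
  note ii = int_glue[OF O K]
  have cA1: "continuous_on \<Omega> A1" and cA2: "continuous_on \<Omega> A2" using A1 A2 unfolding C1_def by blast+
  define Q where "Q = integral UNIV (\<lambda>x. (cmod (Pi1 h A1 u x))\<^sup>2 + (cmod (Pi2 h A2 u x))\<^sup>2)
      - h * integral UNIV (\<lambda>x. B x * (cmod (u x))\<^sup>2)"
  define N where "N = integral UNIV (\<lambda>x. (cmod (u x))\<^sup>2)"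
  have quot: "pauli_quotient h A1 A2 B \<Omega> u = Q / N"
  proof -
    have e1: "integral \<Omega> (\<lambda>x. (cmod (- \<i> * complex_of_real h * pd1 u x - complex_of_real (A1 x) * u x))\<^sup>2
                      + (cmod (- \<i> * complex_of_real h * pd2 u x - complex_of_real (A2 x) * u x))\<^sup>2)
        = integral UNIV (\<lambda>x. (cmod (Pi1 h A1 u x))\<^sup>2 + (cmod (Pi2 h A2 u x))\<^sup>2)"
      unfolding Pi1_def Pi2_def by (rule integral_UNIV_eq) (simp add: uz u1z u2z outO)
    have e2: "integral \<Omega> (\<lambda>x. B x * (cmod (u x))\<^sup>2) = integral UNIV (\<lambda>x. B x * (cmod (u x))\<^sup>2)"
      by (rule integral_UNIV_eq) (simp add: uz outO)
    have e3: "integral \<Omega> (\<lambda>x. (cmod (u x))\<^sup>2) = N"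
      unfolding N_def by (rule integral_UNIV_eq) (simp add: uz outO)
    show ?thesis unfolding pauli_quotient_def e1 e2 e3 Q_def ..
  qed
  have N0: "N > 0" unfolding N_def
  proof (rule pos_integral[OF _ _ K(1)])
    show "continuous_on UNIV (\<lambda>x. (cmod (u x))\<^sup>2)" by (intro continuous_intros cu)
  qed (use uz nz in auto)
  have PI: "integral UNIV (\<lambda>x. (cmod (Pi1 h A1 u x))\<^sup>2 + (cmod (Pi2 h A2 u x))\<^sup>2)
     = integral UNIV (\<lambda>x. (cmod (Pi1 h A1 u x + \<i> * Pi2 h A2 u x))\<^sup>2)
       + h * integral UNIV (\<lambda>x. (pd1 A2 x - pd2 A1 x) * (cmod (u x))\<^sup>2)"
    by (rule pauli_id[OF O K uz u A1 A2])
  have "integral UNIV (\<lambda>x. (pd1 A2 x - pd2 A1 x) * (cmod (u x))\<^sup>2) = integral UNIV (\<lambda>x. B x * (cmod (u x))\<^sup>2)"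
    by (rule integral_cong) (metis curl outO uz norm_zero power_zero_numeral mult_zero_right)
  with PI have Qeq: "Q = integral UNIV (\<lambda>x. (cmod (Pi1 h A1 u x + \<i> * Pi2 h A2 u x))\<^sup>2)"
    unfolding Q_def by simp
  \<comment> \<open>step 2: conjugation\<close>
  have d\<psi>: "\<forall>x\<in>\<Omega>. \<psi> differentiable (at x)" "\<forall>x\<in>\<Omega>. pd1 \<psi> differentiable (at x)" "\<forall>x\<in>\<Omega>. pd2 \<psi> differentiable (at x)"
    using Ck2_facts(1-3)[OF \<psi>] by auto
  have C\<psi>: "C1 \<Omega> \<psi>" unfolding C1_def using Ck2_facts[OF \<psi>] by blast
  have C\<psi>1: "C1 \<Omega> (pd1 \<psi>)" unfolding C1_def using Ck2_facts[OF \<psi>] by blast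
  have C\<psi>2: "C1 \<Omega> (pd2 \<psi>)" unfolding C1_def using Ck2_facts[OF \<psi>] by blast
  define A1' where "A1' = (\<lambda>x. A1 x + pd2 \<psi> x)"
  define A2' where "A2' = (\<lambda>x. A2 x - pd1 \<psi> x)"
  have CA1': "C1 \<Omega> A1'" unfolding A1'_def by (rule C1_addsub(1)[OF O A1 C\<psi>2])
  have CA2': "C1 \<Omega> A2'" unfolding A2'_def by (rule C1_addsub(2)[OF O A2 C\<psi>1])
  have dA1: "\<forall>x\<in>\<Omega>. A1 differentiable (at x)" and dA2: "\<forall>x\<in>\<Omega>. A2 differentiable (at x)"
    using A1 A2 unfolding C1_def by blast+
  have curl': "pd1 A2' x - pd2 A1' x = 0" if x: "x \<in> \<Omega>" for x
  proof -
    have "pd1 A2' x = pd1 A2 x - pd1 (pd1 \<psi>) x" unfolding A2'_def using addsub_pd(5) dA2 d\<psi>(2) x by blast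
    moreover have "pd2 A1' x = pd2 A1 x + pd2 (pd2 \<psi>) x" unfolding A1'_def using addsub_pd(3) dA1 d\<psi>(3) x by blast
    ultimately show ?thesis using curl[OF x] lap[OF x] by simp
  qed
  define w where "w = (\<lambda>x. complex_of_real (exp (\<psi> x / h)) * u x)"
  have hne: "h \<noteq> 0" using h by simp
  have uz': "\<And>x. x \<notin> K \<Longrightarrow> u x = 0" using uz by blast
  have cw1: "C1 UNIV w" unfolding w_def by (rule conj_w(1)[OF O K(1) K(2) uz' u C\<psi> hne])
  have cw3: "pd1 w x = complex_of_real (exp (\<psi> x / h)) * (pd1 u x + complex_of_real (pd1 \<psi> x / h) * u x)"
    if "x \<in> \<Omega>" for x unfolding w_def by (rule conj_w(3)[OF O K(1) K(2) uz' u C\<psi> hne that])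
  have cw4: "pd2 w x = complex_of_real (exp (\<psi> x / h)) * (pd2 u x + complex_of_real (pd2 \<psi> x / h) * u x)"
    if "x \<in> \<Omega>" for x unfolding w_def by (rule conj_w(4)[OF O K(1) K(2) uz' u C\<psi> hne that])
  have wz: "w x = 0" if "x \<notin> K" for x using uz[OF that] unfolding w_def by simp
  have w1z: "pd1 w x = 0" and w2z: "pd2 w x = 0" if "x \<notin> K" for x using pd_zero_out[of K w x] K wz that by auto
  have cwU: "continuous_on UNIV w" "continuous_on UNIV (pd1 w)" "continuous_on UNIV (pd2 w)"
    using cw1 unfolding C1_def by blast+
  have cwO: "continuous_on \<Omega> w" "continuous_on \<Omega> (pd1 w)" "continuous_on \<Omega> (pd2 w)"
    using cwU by (auto intro: continuous_on_subset)
  have cA1': "continuous_on \<Omega> A1'" and cA2': "continuous_on \<Omega> A2'" using CA1' CA2' unfolding C1_def by blast+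
  have PI': "integral UNIV (\<lambda>x. (cmod (Pi1 h A1' w x))\<^sup>2 + (cmod (Pi2 h A2' w x))\<^sup>2)
     = integral UNIV (\<lambda>x. (cmod (Pi1 h A1' w x + \<i> * Pi2 h A2' w x))\<^sup>2)
       + h * integral UNIV (\<lambda>x. (pd1 A2' x - pd2 A1' x) * (cmod (w x))\<^sup>2)"
    by (rule pauli_id[OF O K wz cw1 CA1' CA2'])
  have "integral UNIV (\<lambda>x. (pd1 A2' x - pd2 A1' x) * (cmod (w x))\<^sup>2) = integral UNIV (\<lambda>x::real\<times>real. 0::real)"
  proof (rule integral_cong)
    fix x show "(pd1 A2' x - pd2 A1' x) * (cmod (w x))\<^sup>2 = 0"
      by (cases "x \<in> \<Omega>") (simp_all add: curl' wz outO)
  qed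
  with PI' have PI'': "integral UNIV (\<lambda>x. (cmod (Pi1 h A1' w x))\<^sup>2 + (cmod (Pi2 h A2' w x))\<^sup>2)
     = integral UNIV (\<lambda>x. (cmod (Pi1 h A1' w x + \<i> * Pi2 h A2' w x))\<^sup>2)" by simp
  have pwconj: "Pi1 h A1' w x + \<i> * Pi2 h A2' w x = complex_of_real (exp (\<psi> x / h)) * (Pi1 h A1 u x + \<i> * Pi2 h A2 u x)"
    if x: "x \<in> \<Omega>" for x
    unfolding Pi1_def Pi2_def cw3[OF x] cw4[OF x] unfolding w_def A1'_def A2'_def
    by (rule conj_alg[OF hne])
  have le1: "integral UNIV (\<lambda>x. (cmod (Pi1 h A1' w x + \<i> * Pi2 h A2' w x))\<^sup>2)
      \<le> integral UNIV (\<lambda>x. (cmod (Pi1 h A1 u x + \<i> * Pi2 h A2 u x))\<^sup>2)"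
  proof (rule integral_le)
    show "(\<lambda>x. (cmod (Pi1 h A1' w x + \<i> * Pi2 h A2' w x))\<^sup>2) integrable_on UNIV"
      by (rule ii) (auto simp: Pi1_def Pi2_def wz w1z w2z intro!: continuous_intros cA1' cA2' cwO)
    show "(\<lambda>x. (cmod (Pi1 h A1 u x + \<i> * Pi2 h A2 u x))\<^sup>2) integrable_on UNIV"
      by (rule ii) (auto simp: Pi1_def Pi2_def uz u1z u2z intro!: continuous_intros cA1 cA2 cuO)
    fix x
    show "(cmod (Pi1 h A1' w x + \<i> * Pi2 h A2' w x))\<^sup>2 \<le> (cmod (Pi1 h A1 u x + \<i> * Pi2 h A2 u x))\<^sup>2"
    proof (cases "x \<in> \<Omega>")
      case True
      have E1: "exp (\<psi> x / h) \<le> 1" using \<psi>le[OF True] h by (simp add: divide_nonpos_pos)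
      have "(cmod (Pi1 h A1' w x + \<i> * Pi2 h A2' w x))\<^sup>2 = (exp (\<psi> x / h))\<^sup>2 * (cmod (Pi1 h A1 u x + \<i> * Pi2 h A2 u x))\<^sup>2"
        unfolding pwconj[OF True] by (simp add: norm_mult power_mult_distrib)
      also have "\<dots> \<le> 1 * (cmod (Pi1 h A1 u x + \<i> * Pi2 h A2 u x))\<^sup>2"
        using E1 by (intro mult_right_mono) (auto simp: power_le_one)
      finally show ?thesis by simp
    next
      case False
      then have "x \<notin> K" by (rule outO)
      then show ?thesis by (simp add: Pi1_def Pi2_def wz w1z w2z)
    qed
  qed
  \<comment> \<open>step 3: drop the second component and use the Poincare-type bound\<close>
  have i1: "(\<lambda>x. (cmod (Pi1 h A1' w x))\<^sup>2) integrable_on UNIV"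
    by (rule ii) (auto simp: Pi1_def wz w1z intro!: continuous_intros cA1' cwO)
  have i2: "(\<lambda>x. (cmod (Pi2 h A2' w x))\<^sup>2) integrable_on UNIV"
    by (rule ii) (auto simp: Pi2_def wz w2z intro!: continuous_intros cA2' cwO)
  have le2: "integral UNIV (\<lambda>x. (cmod (Pi1 h A1' w x))\<^sup>2) \<le> integral UNIV (\<lambda>x. (cmod (Pi1 h A1' w x))\<^sup>2 + (cmod (Pi2 h A2' w x))\<^sup>2)"
    by (rule integral_le[OF i1 integrable_add[OF i1 i2]]) simp
  have le3: "integral UNIV (\<lambda>x. (cmod (w x))\<^sup>2) \<le> (4 * L\<^sup>2 / h\<^sup>2) * integral UNIV (\<lambda>x. (cmod (Pi1 h A1' w x))\<^sup>2)"
    by (rule poinc[OF O K wz cw1 cA1' L h])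
  have le4: "exp (2 * m / h) * N \<le> integral UNIV (\<lambda>x. (cmod (w x))\<^sup>2)"
  proof -
    have iu: "(\<lambda>x. (cmod (u x))\<^sup>2) integrable_on UNIV"
      by (rule ii) (auto simp: uz intro!: continuous_intros cuO)
    have iw: "(\<lambda>x. (cmod (w x))\<^sup>2) integrable_on UNIV"
      by (rule ii) (auto simp: wz intro!: continuous_intros cwO)
    have "exp (2 * m / h) * N = integral UNIV (\<lambda>x. exp (2 * m / h) * (cmod (u x))\<^sup>2)"
      unfolding N_def by simp
    also have "\<dots> \<le> integral UNIV (\<lambda>x. (cmod (w x))\<^sup>2)"
    proof (rule integral_le[OF integrable_on_mult_right[OF iu] iw])
      fix x
      show "exp (2 * m / h) * (cmod (u x))\<^sup>2 \<le> (cmod (w x))\<^sup>2"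
      proof (cases "x \<in> \<Omega>")
        case True
        have "2 * m / h \<le> 2 * \<psi> x / h" using \<psi>ge[OF True] h by (simp add: divide_right_mono)
        then have "exp (2 * m / h) \<le> (exp (\<psi> x / h))\<^sup>2" by (simp add: power2_eq_square exp_add[symmetric])
        then have "exp (2 * m / h) * (cmod (u x))\<^sup>2 \<le> (exp (\<psi> x / h))\<^sup>2 * (cmod (u x))\<^sup>2"
          by (intro mult_right_mono) auto
        also have "\<dots> = (cmod (w x))\<^sup>2" unfolding w_def by (simp add: norm_mult power_mult_distrib)
        finally show ?thesis .
      next
        case False then show ?thesis using uz outO by simp
      qed
    qed
    finally show ?thesis .
  qed
  define c where "c = h\<^sup>2 * exp (2 * m / h) / (4 * L\<^sup>2)"
  have "exp (2 * m / h) * N \<le> (4 * L\<^sup>2 / h\<^sup>2) * Q"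
  proof -
    have "exp (2 * m / h) * N \<le> (4 * L\<^sup>2 / h\<^sup>2) * integral UNIV (\<lambda>x. (cmod (Pi1 h A1' w x))\<^sup>2)"
      using le4 le3 by linarith
    also have "\<dots> \<le> (4 * L\<^sup>2 / h\<^sup>2) * Q"
      using le2 le1 PI'' Qeq by (intro mult_left_mono) auto
    finally show ?thesis .
  qed
  then have "c * N \<le> Q" unfolding c_def using h L0 by (simp add: field_simps)
  then have "c \<le> Q / N" using N0 by (simp add: pos_le_divide_eq)
  then show ?thesis unfolding quot c_def .
qed

lemma xlnx_tendsto: "((\<lambda>h::real. h * ln h) \<longlongrightarrow> 0) (at_right 0)"
proof -
  have "((\<lambda>h::real. ln (inverse h) / inverse h) \<longlongrightarrow> 0) (at_right 0)"
    by (rule filterlim_compose[OF ln_x_over_x_tendsto_0 filterlim_inverse_at_top_right])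
  then have "((\<lambda>h::real. - (ln (inverse h) / inverse h)) \<longlongrightarrow> - 0) (at_right 0)"
    by (rule tendsto_minus)
  moreover have "\<forall>\<^sub>F h in at_right 0. - (ln (inverse h) / inverse h) = h * ln (h::real)"
    using eventually_at_right_less[of "0::real"] by eventually_elim (simp add: ln_inverse divide_inverse)
  ultimately show ?thesis by (simp add: tendsto_cong)
qed

theorem corollary5p3:
  fixes \<Omega> :: "(real \<times> real) set"
    and B \<psi>0 A1 A2 :: "real \<times> real \<Rightarrow> real"
  assumes dom: "smooth_bounded_domain \<Omega>"
    and B_smooth: "smooth_closure \<Omega> B"
    and B_pos: "\<forall>x\<in>closure \<Omega>. B x > 0"
    and psi_reg: "Ck_on 2 \<Omega> \<psi>0" "continuous_on (closure \<Omega>) \<psi>0"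
    and psi_eq: "\<forall>x\<in>\<Omega>. pd1 (pd1 \<psi>0) x + pd2 (pd2 \<psi>0) x = B x"
    and psi_bd: "\<forall>x\<in>frontier \<Omega>. \<psi>0 x = 0"
    and A_C1: "Ck_closure 1 \<Omega> A1" "Ck_closure 1 \<Omega> A2"
    and curl: "\<forall>x\<in>\<Omega>. pd1 A2 x - pd2 A1 x = B x"
  shows "ereal (2 * Inf (\<psi>0 ` \<Omega>))
           \<le> Liminf (at_right 0) (\<lambda>h. ereal (h * ln (pauli_lambda h A1 A2 B \<Omega>)))"
proof -
  have O: "open \<Omega>" "bounded \<Omega>" "\<Omega> \<noteq> {}" using dom unfolding smooth_bounded_domain_def by auto
  have A1: "C1 \<Omega> A1"
  proof -
    obtain U where "open U" "closure \<Omega> \<subseteq> U" "Ck_on 1 U A1" using A_C1(1) unfolding Ck_closure_def by blast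
    then show ?thesis using C1_sub closure_subset unfolding Ck1_C1 by blast
  qed
  have A2: "C1 \<Omega> A2"
  proof -
    obtain U where "open U" "closure \<Omega> \<subseteq> U" "Ck_on 1 U A2" using A_C1(2) unfolding Ck_closure_def by blast
    then show ?thesis using C1_sub closure_subset unfolding Ck1_C1 by blast
  qed
  have Bpos: "B x > 0" if "x \<in> \<Omega>" for x using B_pos closure_subset that by blast
  have \<psi>le: "\<psi>0 x \<le> 0" if x: "x \<in> \<Omega>" for x
  proof (rule max_principle[OF O(1) O(2) psi_reg(2) psi_reg(1) _ _ x])
    show "\<And>x. x \<in> \<Omega> \<Longrightarrow> pd1 (pd1 \<psi>0) x + pd2 (pd2 \<psi>0) x > 0" using psi_eq Bpos by simp
    show "\<And>x. x \<in> frontier \<Omega> \<Longrightarrow> \<psi>0 x = 0" using psi_bd by simp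
  qed
  define m where "m = Inf (\<psi>0 ` \<Omega>)"
  have bdd: "bdd_below (\<psi>0 ` \<Omega>)"
  proof -
    have "compact (\<psi>0 ` closure \<Omega>)"
      by (rule compact_continuous_image[OF psi_reg(2)]) (use O(2) compact_closure in blast)
    then have "bdd_below (\<psi>0 ` closure \<Omega>)" by (intro bounded_imp_bdd_below compact_imp_bounded)
    then show ?thesis by (rule bdd_below_mono) (use closure_subset in blast)
  qed
  have \<psi>ge: "m \<le> \<psi>0 x" if "x \<in> \<Omega>" for x unfolding m_def using bdd that by (simp add: cInf_lower)
  obtain L0 where L0: "\<forall>x\<in>\<Omega>. norm x \<le> L0" using O(2) bounded_iff by blast
  define L where "L = \<bar>L0\<bar> + 1"
  have Lpos: "L > 0" unfolding L_def by simp
  have L: "\<bar>fst x\<bar> \<le> L" if "x \<in> \<Omega>" for x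
  proof -
    have "\<bar>fst x\<bar> \<le> norm x" by (cases x) (metis fst_conv norm_fst_le real_norm_def)
    then show ?thesis using L0 that unfolding L_def by fastforce
  qed
  define c where "c = (\<lambda>h::real. h\<^sup>2 * exp (2 * m / h) / (4 * L\<^sup>2))"
  have lam: "c h \<le> pauli_lambda h A1 A2 B \<Omega>" if h: "h > 0" for h
  proof -
    have ne: "{pauli_quotient h A1 A2 B \<Omega> u | u. test_fun \<Omega> u \<and> (\<exists>x. u x \<noteq> 0)} \<noteq> {}"
      using bump_exists[OF O(1) O(3)] by blast
    show ?thesis unfolding pauli_lambda_def
    proof (rule cInf_greatest[OF ne])
      fix q assume "q \<in> {pauli_quotient h A1 A2 B \<Omega> u | u. test_fun \<Omega> u \<and> (\<exists>x. u x \<noteq> 0)}"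
      then obtain u x0 where q: "q = pauli_quotient h A1 A2 B \<Omega> u" "test_fun \<Omega> u" "u x0 \<noteq> 0" by blast
      show "c h \<le> q" unfolding q(1) c_def
        by (rule lower[OF O(1) h q(2) q(3) psi_reg(1) \<psi>le \<psi>ge _ A1 A2 _ L Lpos]) (use psi_eq curl in auto)
    qed
  qed
  define g where "g = (\<lambda>h::real. 2 * m + 2 * (h * ln h) - h * ln (4 * L\<^sup>2))"
  have glow: "g h \<le> h * ln (pauli_lambda h A1 A2 B \<Omega>)" if h: "h > 0" for h
  proof -
    have c0: "c h > 0" unfolding c_def using h Lpos by simp
    have lnc: "ln (c h) = 2 * ln h + 2 * m / h - ln (4 * L\<^sup>2)"
      unfolding c_def using h Lpos by (simp add: ln_div ln_mult ln_realpow)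
    have eqg: "h * ln (c h) = g h"
    proof -
      have "h * ln (c h) = h * (2 * ln h + 2 * m / h - ln (4 * L\<^sup>2))" using lnc by simp
      also have "\<dots> = g h" unfolding g_def using h by (simp add: field_simps)
      finally show ?thesis .
    qed
    have "ln (c h) \<le> ln (pauli_lambda h A1 A2 B \<Omega>)" using lam[OF h] c0 by simp
    then have "h * ln (c h) \<le> h * ln (pauli_lambda h A1 A2 B \<Omega>)" using h by (simp add: mult_left_mono)
    then show ?thesis using eqg by simp
  qed
  have glim: "(g \<longlongrightarrow> 2 * m) (at_right 0)"
  proof -
    have "((\<lambda>h. 2 * m + 2 * (h * ln h) - h * ln (4 * L\<^sup>2)) \<longlongrightarrow> 2 * m + 2 * 0 - 0 * ln (4 * L\<^sup>2)) (at_right 0)"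
      by (intro tendsto_intros xlnx_tendsto)
    then show ?thesis unfolding g_def by simp
  qed
  have "Liminf (at_right 0) (\<lambda>h. ereal (g h)) = ereal (2 * m)"
    by (rule lim_imp_Liminf) (auto intro: tendsto_ereal glim)
  moreover have "Liminf (at_right 0) (\<lambda>h. ereal (g h)) \<le> Liminf (at_right 0) (\<lambda>h. ereal (h * ln (pauli_lambda h A1 A2 B \<Omega>)))"
    by (rule Liminf_mono) (use eventually_at_right_less[of "0::real"] in \<open>eventually_elim, simp add: glow\<close>)
  ultimately show ?thesis unfolding m_def by simp
qed

end
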